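(* Let $p$ be a prime and $\mathcal{A}$ an irreducible $3\times3$ znz-pattern. Then $\mathcal{A}$ is potentially nilpotent over $\mathbb{Z}_p$ if and only if, up to equivalence, one of the following holds: 1. $\mathcal{A}$ is one of $\begin{bmatrix}0&*&0\\ *&0&*\\ 0&*&0\end{bmatrix}$, $\begin{bmatrix}*&*&0\\ *&0&*\\ *&0&*\end{bmatrix}$, $\begin{bmatrix}0&*&0\\ *&*&*\\ *&0&*\end{bmatrix}$, $\begin{bmatrix}*&*&*\\ *&*&*\\ *&*&0\end{bmatrix}$ (any $p$); 2. $\mathcal{A}$ is one of $\begin{bmatrix}*&*&0\\ *&0&*\\ 0&*&*\end{bmatrix}$, $\begin{bmatrix}*&*&*\\ *&*&*\\ *&0&0\end{bmatrix}$, $\begin{bmatrix}*&*&*\\ *&0&*\\ *&0&*\end{bmatrix}$, $\begin{bmatrix}*&*&*\\ *&*&*\\ *&0&*\end{bmatrix}$, $\begin{bmatrix}0&*&*\\ *&0&*\\ *&*&0\end{bmatrix}$, $\begin{bmatrix}*&*&*\\ *&*&*\\ *&*&*\end{bmatrix}$, and $p\neq2$; 3. $\mathcal{A}$ is one of $\begin{bmatrix}*&*&0\\ *&*&*\\ 0&*&*\end{bmatrix}$, $\begin{bmatrix}*&*&0\\ *&*&*\\ *&0&*\end{bmatrix}$, $\begin{bmatrix}0&*&*\\ *&*&*\\ *&0&*\end{bmatrix}$, and $p\notin\{2,3\}$; 4. $\mathcal{A}=\begin{bmatrix}*&*&0\\ 0&*&*\\ *&0&*\end{bmatrix}$ and the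 polynomial $x^3-1$ splits into three linear factors over $\mathbb{Z}_p$.
   Context: A znz-pattern is a square matrix with entries in $\{*,0\}$; a realization over $\mathbb{F}$ is a matrix over $\mathbb{F}$ with nonzero entries exactly at the $*$ positions; potentially nilpotent over $\mathbb{F}$ means some realization is nilpotent. The digraph $D(\mathcal{A})$ has vertices $1,\ldots,n$ and an arc $(i,j)$ when $\mathcal{A}_{i,j}=*$; $\mathcal{A}$ is irreducible iff $D(\mathcal{A})$ is strongly connected. Two patterns are equivalent if they have the same digraph up to relabeling of vertices (i.e., they are permutation similar). $\mathbb{Z}_p$ is the field with $p$ elements. *)

theory Defs
  imports "Jordan_Normal_Form.Matrix" "Berlekamp_Zassenhaus.Finite_Field"
    "HOL-Computational_Algebra.Polynomial" "HOL-Combinatorics.Permutations"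
begin

text \<open>A znz-pattern of order n is a boolean n x n matrix: True stands for a star
  (nonzero) entry, False for a zero entry.\<close>

definition is_pattern :: "nat \<Rightarrow> bool mat \<Rightarrow> bool" where
  "is_pattern n P \<longleftrightarrow> P \<in> carrier_mat n n"

definition realizes :: "'a::zero mat \<Rightarrow> bool mat \<Rightarrow> bool" where
  "realizes A P \<longleftrightarrow> dim_row A = dim_row P \<and> dim_col A = dim_col P \<and>
     (\<forall>i < dim_row P. \<forall>j < dim_col P. (A $$ (i, j) \<noteq> 0) = P $$ (i, j))"

definition nilpotent_mat :: "'a::semiring_1 mat \<Rightarrow> bool" where
  "nilpotent_mat A \<longleftrightarrow> (\<exists>k. A ^\<^sub>m k = 0\<^sub>m (dim_row A) (dim_col A))"

definition pot_nilpotent :: "'a::field itself \<Rightarrow> bool mat \<Rightarrow> bool" where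
  "pot_nilpotent _ P \<longleftrightarrow> (\<exists>A :: 'a mat. realizes A P \<and> nilpotent_mat A)"

definition arcs :: "bool mat \<Rightarrow> (nat \<times> nat) set" where
  "arcs P = {(i, j). i < dim_row P \<and> j < dim_col P \<and> P $$ (i, j)}"

definition irreducible_pattern :: "bool mat \<Rightarrow> bool" where
  "irreducible_pattern P \<longleftrightarrow>
     (\<forall>i < dim_row P. \<forall>j < dim_row P. (i, j) \<in> (arcs P)\<^sup>*)"

definition equiv_pattern :: "bool mat \<Rightarrow> bool mat \<Rightarrow> bool" where
  "equiv_pattern P Q \<longleftrightarrow> dim_row P = dim_row Q \<and> dim_col P = dim_row P \<and>
     dim_col Q = dim_row Q \<and>
     (\<exists>\<sigma>. \<sigma> permutes {..<dim_row P} \<and>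
        (\<forall>i < dim_row P. \<forall>j < dim_row P. P $$ (\<sigma> i, \<sigma> j) = Q $$ (i, j)))"

abbreviation S :: bool where "S \<equiv> True"
abbreviation Z :: bool where "Z \<equiv> False"

definition pat :: "bool list list \<Rightarrow> bool mat" where
  "pat rs = mat_of_rows_list 3 rs"

definition list1 :: "bool mat list" where
  "list1 = map pat
    [[[Z,S,Z],[S,Z,S],[Z,S,Z]],
     [[S,S,Z],[S,Z,S],[S,Z,S]],
     [[Z,S,Z],[S,S,S],[S,Z,S]],
     [[S,S,S],[S,S,S],[S,S,Z]]]"

definition list2 :: "bool mat list" where
  "list2 = map pat
    [[[S,S,Z],[S,Z,S],[Z,S,S]],
     [[S,S,S],[S,S,S],[S,Z,Z]],
     [[S,S,S],[S,Z,S],[S,Z,S]],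
     [[S,S,S],[S,S,S],[S,Z,S]],
     [[Z,S,S],[S,Z,S],[S,S,Z]],
     [[S,S,S],[S,S,S],[S,S,S]]]"

definition list3 :: "bool mat list" where
  "list3 = map pat
    [[[S,S,Z],[S,S,S],[Z,S,S]],
     [[S,S,Z],[S,S,S],[S,Z,S]],
     [[Z,S,S],[S,S,S],[S,Z,S]]]"

definition pat4 :: "bool mat" where
  "pat4 = pat [[S,S,Z],[Z,S,S],[S,Z,S]]"

definition cube_minus_one_splits :: "'a::comm_ring_1 itself \<Rightarrow> bool" where
  "cube_minus_one_splits _ \<longleftrightarrow> (\<exists>a b c :: 'a.
     [:-1, 0, 0, 1:] = [:-a, 1:] * [:-b, 1:] * [:-c, 1:])"

end

theory Submission
  imports Defs
begin

lemma all3: "(\<forall>i<(3::nat). P i) = (P 0 \<and> P 1 \<and> P 2)"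
proof -
  have "{..<3::nat} = {0,1,2}" by auto
  then have "(\<forall>i<(3::nat). P i) = (\<forall>i\<in>{0,1,2}. P i)" by (metis lessThan_iff)
  then show ?thesis by simp
qed

lemma sum3: "(\<Sum>k<(3::nat). f k) = f 0 + f 1 + f 2"
  by (simp add: numeral_3_eq_3 numeral_2_eq_2)

lemma mult3: assumes "X \<in> carrier_mat 3 3" "Y \<in> carrier_mat 3 3" "i < 3" "j < 3"
  shows "(X * Y) $$ (i,j) = X $$ (i,0) * Y $$ (0,j) + X $$ (i,1) * Y $$ (1,j) + X $$ (i,2) * Y $$ (2,j)"
  using assms by (simp add: scalar_prod_def numeral_3_eq_3 numeral_2_eq_2 algebra_simps)

lemma mat3_eqI: assumes "X \<in> carrier_mat 3 3" "Y \<in> carrier_mat 3 3"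
  "\<And>i j. i < 3 \<Longrightarrow> j < 3 \<Longrightarrow> X $$ (i,j) = Y $$ (i,j)" shows "X = Y"
  using assms by (intro eq_matI) auto

definition t3 :: "('a::comm_ring_1) mat \<Rightarrow> 'a" where
  "t3 A = A$$(0,0) + A$$(1,1) + A$$(2,2)"
definition s3 :: "('a::comm_ring_1) mat \<Rightarrow> 'a" where
  "s3 A = A$$(0,0)*A$$(1,1) - A$$(0,1)*A$$(1,0) + A$$(0,0)*A$$(2,2) - A$$(0,2)*A$$(2,0)
     + A$$(1,1)*A$$(2,2) - A$$(1,2)*A$$(2,1)"
definition d3 :: "('a::comm_ring_1) mat \<Rightarrow> 'a" where
  "d3 A = A$$(0,0)*(A$$(1,1)*A$$(2,2) - A$$(1,2)*A$$(2,1))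
        - A$$(0,1)*(A$$(1,0)*A$$(2,2) - A$$(1,2)*A$$(2,0))
        + A$$(0,2)*(A$$(1,0)*A$$(2,1) - A$$(1,1)*A$$(2,0))"

lemma CH3: fixes A :: "'a::comm_ring_1 mat" assumes A: "A \<in> carrier_mat 3 3"
  shows "A * A * A = t3 A \<cdot>\<^sub>m (A * A) - s3 A \<cdot>\<^sub>m A + d3 A \<cdot>\<^sub>m 1\<^sub>m 3"
proof (rule mat3_eqI)
  show "A * A * A \<in> carrier_mat 3 3" using A by auto
  show "t3 A \<cdot>\<^sub>m (A * A) - s3 A \<cdot>\<^sub>m A + d3 A \<cdot>\<^sub>m 1\<^sub>m 3 \<in> carrier_mat 3 3" using A by auto
  fix i j :: nat assume i: "i < 3" and j: "j < 3"
  have AA: "A * A \<in> carrier_mat 3 3" using A by auto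
  from i j have "(i = 0 \<or> i = 1 \<or> i = 2) \<and> (j = 0 \<or> j = 1 \<or> j = 2)" by auto
  then show "(A * A * A) $$ (i,j) = (t3 A \<cdot>\<^sub>m (A * A) - s3 A \<cdot>\<^sub>m A + d3 A \<cdot>\<^sub>m 1\<^sub>m 3) $$ (i,j)"
    using A AA by (elim conjE disjE; simp del: index_mult_mat add: mult3[OF AA A] mult3[OF A AA] mult3[OF A A] carrier_matD[OF A] carrier_matD[OF AA] t3_def s3_def d3_def algebra_simps)
qed

lemma pow_comm: assumes A: "A \<in> carrier_mat n n" and C: "C \<in> carrier_mat n n"
  and AC: "A * C = C * A" shows "A ^\<^sub>m k * C = C * A ^\<^sub>m k"
proof (induction k)
  case 0
  have "dim_row A = n" using A by simp
  then show ?case using C by simp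
next
  case (Suc k)
  have "A ^\<^sub>m Suc k * C = A ^\<^sub>m k * (A * C)"
    using assoc_mult_mat[OF pow_carrier_mat[OF A] A C, of k] by simp
  also have "\<dots> = (A ^\<^sub>m k * C) * A"
    using AC assoc_mult_mat[OF pow_carrier_mat[OF A] C A, of k] by simp
  also have "\<dots> = C * A ^\<^sub>m Suc k"
    using Suc assoc_mult_mat[OF C pow_carrier_mat[OF A] A, of k] by simp
  finally show ?case .
qed

lemma pow_mult_comm: assumes A: "A \<in> carrier_mat n n" and C: "C \<in> carrier_mat n n"
  and AC: "A * C = C * A" shows "(A * C) ^\<^sub>m k = A ^\<^sub>m k * C ^\<^sub>m k"
proof (induction k)
  case 0 then show ?case using A C by simp
next
  case (Suc k)
  have Ak: "A ^\<^sub>m k \<in> carrier_mat n n" and Ck: "C ^\<^sub>m k \<in> carrier_mat n n"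
    using A C by auto
  have "(A * C) ^\<^sub>m Suc k = A ^\<^sub>m k * C ^\<^sub>m k * (A * C)" using Suc by simp
  also have "\<dots> = A ^\<^sub>m k * (C ^\<^sub>m k * (A * C))"
    using assoc_mult_mat[OF Ak Ck, of "A * C" n] A C by simp
  also have "C ^\<^sub>m k * (A * C) = (C ^\<^sub>m k * A) * C"
    using assoc_mult_mat[OF Ck A C] by simp
  also have "C ^\<^sub>m k * A = A * C ^\<^sub>m k" using pow_comm[OF C A AC[symmetric]] .
  also have "(A * C ^\<^sub>m k) * C = A * (C ^\<^sub>m k * C)" using assoc_mult_mat[OF A Ck C] .
  also have "A ^\<^sub>m k * (A * (C ^\<^sub>m k * C)) = (A ^\<^sub>m k * A) * (C ^\<^sub>m k * C)"
    using assoc_mult_mat[OF Ak A, of "C ^\<^sub>m k * C" n] C Ck by simp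
  finally show ?case by simp
qed

lemma pow_mult_comm_zero: assumes A: "A \<in> carrier_mat n n" and C: "C \<in> carrier_mat n n"
  and AC: "A * C = C * A" and Z: "A ^\<^sub>m k = 0\<^sub>m n n" shows "(A * C) ^\<^sub>m k = 0\<^sub>m n n"
  using pow_mult_comm[OF A C AC] Z C by simp

lemma fix_zero: fixes X :: "'a::field mat"
  assumes X: "X \<in> carrier_mat n n" and F: "F \<in> carrier_mat n n" and c: "c \<noteq> 0"
  and XF: "c \<cdot>\<^sub>m X = X * F" and Z: "F ^\<^sub>m k = 0\<^sub>m n n" shows "X = 0\<^sub>m n n"
proof -
  have "c ^ m \<cdot>\<^sub>m X = X * F ^\<^sub>m m" for m
  proof (induction m)
    case 0
    have "dim_row F = n" using F by simp
    then show ?case using X by (intro eq_matI) auto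
  next
    case (Suc m)
    have "c ^ Suc m \<cdot>\<^sub>m X = c ^ m \<cdot>\<^sub>m (c \<cdot>\<^sub>m X)" using X by (intro eq_matI) auto
    also have "\<dots> = c ^ m \<cdot>\<^sub>m (X * F)" using XF by simp
    also have "\<dots> = (c ^ m \<cdot>\<^sub>m X) * F" using X F by (simp add: mult_smult_assoc_mat)
    also have "\<dots> = X * F ^\<^sub>m Suc m" using Suc assoc_mult_mat[OF X pow_carrier_mat[OF F] F, of m] by simp
    finally show ?case .
  qed
  from this[of k] have E: "c ^ k \<cdot>\<^sub>m X = 0\<^sub>m n n" using Z X by simp
  show ?thesis
  proof (intro eq_matI)
    fix i j assume "i < dim_row (0\<^sub>m n n :: 'a mat)" "j < dim_col (0\<^sub>m n n :: 'a mat)"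
    then have ij: "i < n" "j < n" by auto
    from arg_cong[OF E, of "\<lambda>M. M $$ (i,j)"] ij X have "c ^ k * X $$ (i,j) = 0" by simp
    then show "X $$ (i,j) = 0\<^sub>m n n $$ (i,j)" using c ij by simp
  qed (use X in auto)
qed

lemma mat3_eq9: assumes "X \<in> carrier_mat 3 3" "Y \<in> carrier_mat 3 3"
  "X $$ (0,0) = Y $$ (0,0)" "X $$ (0,1) = Y $$ (0,1)" "X $$ (0,2) = Y $$ (0,2)"
  "X $$ (1,0) = Y $$ (1,0)" "X $$ (1,1) = Y $$ (1,1)" "X $$ (1,2) = Y $$ (1,2)"
  "X $$ (2,0) = Y $$ (2,0)" "X $$ (2,1) = Y $$ (2,1)" "X $$ (2,2) = Y $$ (2,2)"
  shows "X = Y"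
proof (rule mat3_eqI[OF assms(1,2)])
  fix i j :: nat assume "i < 3" "j < 3"
  then have "(i = 0 \<or> i = 1 \<or> i = 2) \<and> (j = 0 \<or> j = 1 \<or> j = 2)" by auto
  then show "X $$ (i,j) = Y $$ (i,j)" using assms(3-) by auto
qed

lemma nil3_imp: fixes A :: "'a::field mat" assumes A: "A \<in> carrier_mat 3 3"
  and N: "A ^\<^sub>m k = 0\<^sub>m 3 3" shows "t3 A = 0 \<and> s3 A = 0 \<and> d3 A = 0"
proof -
  define t where "t = t3 A"
  define s where "s = s3 A"
  define d where "d = d3 A"
  define I where "I = (1\<^sub>m 3 :: 'a mat)"
  have I: "I \<in> carrier_mat 3 3" unfolding I_def by simp
  have AA: "A * A \<in> carrier_mat 3 3" using A by simp
  define B where "B = A * A - t \<cdot>\<^sub>m A + s \<cdot>\<^sub>m I"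
  have B: "B \<in> carrier_mat 3 3" unfolding B_def using A I by (simp add: minus_carrier_mat)
  define G where "G = t \<cdot>\<^sub>m I - A"
  have G: "G \<in> carrier_mat 3 3" unfolding G_def using A I by (simp add: minus_carrier_mat)
  have AB: "A * B \<in> carrier_mat 3 3" "B * A \<in> carrier_mat 3 3" using A B by auto
  have AG: "A * G \<in> carrier_mat 3 3" "G * A \<in> carrier_mat 3 3" using A G by auto
  have AAG: "A * (A * G) \<in> carrier_mat 3 3" using A AG by auto
  have Be: "B $$ (i,j) = (A * A) $$ (i,j) - t * A $$ (i,j) + (if i = j then s else 0)"
    if "i < 3" "j < 3" for i j
    using that A unfolding B_def I_def by (simp add: minus_carrier_mat)
  have Ge: "G $$ (i,j) = (if i = j then t else 0) - A $$ (i,j)"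
    if "i < 3" "j < 3" for i j
    using that A unfolding G_def I_def by (simp add: minus_carrier_mat)
  have I1: "d \<cdot>\<^sub>m I = A * B"
    apply (rule mat3_eq9)
    apply (use I in simp)
    apply (use AB in simp)
    apply (simp_all del: index_mult_mat add: mult3[OF A B] Be mult3[OF A A] carrier_matD[OF A] 
       I_def t_def s_def d_def t3_def s3_def d3_def algebra_simps)
    done
  have I2: "A * B = B * A"
    apply (rule mat3_eq9)
    apply (use AB in simp)
    apply (use AB in simp)
    apply (simp_all del: index_mult_mat add: mult3[OF A B] mult3[OF B A] Be mult3[OF A A] carrier_matD[OF A]
       algebra_simps)
    done
  have I3: "A * G = G * A"
    apply (rule mat3_eq9)
    apply (use AG in simp)
    apply (use AG in simp)
    apply (simp_all del: index_mult_mat add: mult3[OF A G] mult3[OF G A] Ge carrier_matD[OF A]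
       algebra_simps)
    done
  have I4: "s \<cdot>\<^sub>m A - d \<cdot>\<^sub>m I = A * (A * G)"
    apply (rule mat3_eq9)
    apply (use A I in \<open>simp add: minus_carrier_mat\<close>)
    apply (use AAG in simp)
    apply (simp_all del: index_mult_mat add: mult3[OF A AG(1)] mult3[OF A G] Ge carrier_matD[OF A]
       I_def t_def s_def d_def t3_def s3_def d3_def algebra_simps)
    done
  have I5: "(A * A) $$ (0,0) + (A * A) $$ (1,1) + (A * A) $$ (2,2) = t * t - 2 * s"
    by (simp del: index_mult_mat add: mult3[OF A A] t_def s_def t3_def s3_def algebra_simps)
  have CH: "(A * A) * A = t \<cdot>\<^sub>m (A * A) - s \<cdot>\<^sub>m A + d \<cdot>\<^sub>m I"
    using CH3[OF A] unfolding t_def s_def d_def I_def by simp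
  have k0: "k \<noteq> 0"
  proof
    assume "k = 0"
    with N A have "(1\<^sub>m 3 :: 'a mat) = 0\<^sub>m 3 3" by simp
    from arg_cong[OF this, of "\<lambda>M. M $$ (0,0)"] show False by simp
  qed
  have d0: "d = 0"
  proof (rule ccontr)
    assume "d \<noteq> 0"
    have "(A * B) ^\<^sub>m k = 0\<^sub>m 3 3" by (rule pow_mult_comm_zero[OF A B I2 N])
    have "I = 0\<^sub>m 3 3" by (rule fix_zero[OF I AB(1) \<open>d \<noteq> 0\<close> _ \<open>(A * B) ^\<^sub>m k = 0\<^sub>m 3 3\<close>])
       (use I1 left_mult_one_mat[OF AB(1)] in \<open>simp add: I_def\<close>)
    from arg_cong[OF this, of "\<lambda>M. M $$ (0,0)"] show False by (simp add: I_def)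
  qed
  have s0: "s = 0"
  proof (rule ccontr)
    assume "s \<noteq> 0"
    have "(A * G) ^\<^sub>m k = 0\<^sub>m 3 3" by (rule pow_mult_comm_zero[OF A G I3 N])
    have "s \<cdot>\<^sub>m A - 0 \<cdot>\<^sub>m I = s \<cdot>\<^sub>m A" using A I by (intro eq_matI) auto
    then have "s \<cdot>\<^sub>m A = A * (A * G)" using I4 d0 by simp
    have "A = 0\<^sub>m 3 3" by (rule fix_zero[OF A AG(1) \<open>s \<noteq> 0\<close> \<open>s \<cdot>\<^sub>m A = A * (A * G)\<close> \<open>(A * G) ^\<^sub>m k = 0\<^sub>m 3 3\<close>])
    then have "s3 A = 0" by (simp add: s3_def)
    then show False using \<open>s \<noteq> 0\<close> s_def by simp
  qed
  have t0: "t = 0"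
  proof (rule ccontr)
    assume "t \<noteq> 0"
    have "t \<cdot>\<^sub>m (A * A) - 0 \<cdot>\<^sub>m A + 0 \<cdot>\<^sub>m I = t \<cdot>\<^sub>m (A * A)" using A I AA by (intro eq_matI) auto
    then have "t \<cdot>\<^sub>m (A * A) = (A * A) * A" using CH s0 d0 by simp
    have "A * A = 0\<^sub>m 3 3" by (rule fix_zero[OF AA A \<open>t \<noteq> 0\<close> \<open>t \<cdot>\<^sub>m (A * A) = (A * A) * A\<close> N])
    then have "t * t - 2 * s = 0" using I5 by simp
    then show False using s0 \<open>t \<noteq> 0\<close> by simp
  qed
  show ?thesis using t0 s0 d0 t_def s_def d_def by simp
qed

lemma nil3_iff: fixes A :: "'a::field mat" assumes A: "A \<in> carrier_mat 3 3"
  shows "nilpotent_mat A \<longleftrightarrow> t3 A = 0 \<and> s3 A = 0 \<and> d3 A = 0"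
proof
  assume "nilpotent_mat A"
  then obtain k where "A ^\<^sub>m k = 0\<^sub>m 3 3" using A unfolding nilpotent_mat_def by auto
  then show "t3 A = 0 \<and> s3 A = 0 \<and> d3 A = 0" using nil3_imp[OF A] by blast
next
  assume z: "t3 A = 0 \<and> s3 A = 0 \<and> d3 A = 0"
  have "A ^\<^sub>m 3 = A * A * A" using A by (simp add: numeral_3_eq_3)
  also have "\<dots> = 0\<^sub>m 3 3" using CH3[OF A] z A by (auto intro!: eq_matI)
  finally show "nilpotent_mat A" using A unfolding nilpotent_mat_def by auto
qed


definition tf :: "(nat \<Rightarrow> nat \<Rightarrow> 'a::comm_ring_1) \<Rightarrow> 'a" where
  "tf x = x 0 0 + x 1 1 + x 2 2"
definition sf :: "(nat \<Rightarrow> nat \<Rightarrow> 'a::comm_ring_1) \<Rightarrow> 'a" where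
  "sf x = x 0 0 * x 1 1 - x 0 1 * x 1 0 + x 0 0 * x 2 2 - x 0 2 * x 2 0 + x 1 1 * x 2 2 - x 1 2 * x 2 1"
definition df :: "(nat \<Rightarrow> nat \<Rightarrow> 'a::comm_ring_1) \<Rightarrow> 'a" where
  "df x = x 0 0 * (x 1 1 * x 2 2 - x 1 2 * x 2 1) - x 0 1 * (x 1 0 * x 2 2 - x 1 2 * x 2 0)
        + x 0 2 * (x 1 0 * x 2 1 - x 1 1 * x 2 0)"

definition NN :: "'a::field itself \<Rightarrow> (nat \<Rightarrow> nat \<Rightarrow> bool) \<Rightarrow> bool" where
  "NN _ b \<longleftrightarrow> (\<exists>x :: nat \<Rightarrow> nat \<Rightarrow> 'a. (\<forall>i<3. \<forall>j<3. (x i j \<noteq> 0) = b i j)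
      \<and> tf x = 0 \<and> sf x = 0 \<and> df x = 0)"

lemma pot_iff: assumes P: "P \<in> carrier_mat 3 3"
  shows "pot_nilpotent TYPE('a::field) P \<longleftrightarrow> NN TYPE('a) (\<lambda>i j. P $$ (i,j))"
proof
  assume "pot_nilpotent TYPE('a) P"
  then obtain A :: "'a mat" where R: "realizes A P" and N: "nilpotent_mat A"
    unfolding pot_nilpotent_def by auto
  from R P have A: "A \<in> carrier_mat 3 3" unfolding realizes_def by auto
  from nil3_iff[OF A] N have z: "t3 A = 0 \<and> s3 A = 0 \<and> d3 A = 0" by simp
  show "NN TYPE('a) (\<lambda>i j. P $$ (i,j))" unfolding NN_def
    apply (rule exI[of _ "\<lambda>i j. A $$ (i,j)"])
    using R P z by (auto simp: realizes_def t3_def s3_def d3_def tf_def sf_def df_def)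
next
  assume "NN TYPE('a) (\<lambda>i j. P $$ (i,j))"
  then obtain x :: "nat \<Rightarrow> nat \<Rightarrow> 'a" where X: "\<forall>i<3. \<forall>j<3. (x i j \<noteq> 0) = P $$ (i,j)"
    and z: "tf x = 0" "sf x = 0" "df x = 0" unfolding NN_def by auto
  define A where "A = mat 3 3 (\<lambda>(i,j). x i j)"
  have A: "A \<in> carrier_mat 3 3" unfolding A_def by simp
  have "realizes A P" using X P unfolding realizes_def A_def by auto
  moreover have "nilpotent_mat A" using z unfolding nil3_iff[OF A]
    by (simp add: A_def t3_def s3_def d3_def tf_def sf_def df_def)
  ultimately show "pot_nilpotent TYPE('a) P" unfolding pot_nilpotent_def by auto
qed

definition perms6 :: "nat list list" where
  "perms6 = [[0,1,2],[0,2,1],[1,0,2],[1,2,0],[2,0,1],[2,1,0]]"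

lemma perms6_lt: assumes "l \<in> set perms6" "i < 3" shows "l ! i < 3"
proof -
  from assms(2) have "i = 0 \<or> i = 1 \<or> i = 2" by auto
  with assms(1) show ?thesis unfolding perms6_def by auto
qed

lemma inv_tsd: fixes x :: "nat \<Rightarrow> nat \<Rightarrow> 'a::comm_ring_1" assumes "l \<in> set perms6"
  shows "tf (\<lambda>i j. x (l!i) (l!j)) = tf x \<and> sf (\<lambda>i j. x (l!i) (l!j)) = sf x \<and> df (\<lambda>i j. x (l!i) (l!j)) = df x"
proof -
  from assms have "l = [0,1,2] \<or> l = [0,2,1] \<or> l = [1,0,2] \<or> l = [1,2,0] \<or> l = [2,0,1] \<or> l = [2,1,0]"
    unfolding perms6_def by simp
  then show ?thesis unfolding tf_def sf_def df_def by (elim disjE) (simp_all add: algebra_simps)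
qed

lemma perm3_list: assumes "\<sigma> permutes {..<3::nat}"
  shows "\<exists>l\<in>set perms6. \<forall>i<3. \<sigma> i = l ! i"
proof -
  have lt: "\<sigma> i < 3" if "i < 3" for i using permutes_in_image[OF assms] that by auto
  have inj: "inj \<sigma>" using permutes_inj[OF assms] .
  define a b c where "a = \<sigma> 0" "b = \<sigma> 1" "c = \<sigma> 2"
  have abc: "a < 3" "b < 3" "c < 3" using lt unfolding a_b_c_def by auto
  have d: "a \<noteq> b" "a \<noteq> c" "b \<noteq> c" unfolding a_b_c_def
    using injD[OF inj, of 0 1] injD[OF inj, of 0 2] injD[OF inj, of 1 2] by auto
  have "[a,b,c] \<in> set perms6"
  proof -
    from abc have "(a = 0 \<or> a = 1 \<or> a = 2) \<and> (b = 0 \<or> b = 1 \<or> b = 2) \<and> (c = 0 \<or> c = 1 \<or> c = 2)" by auto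
    then show ?thesis using d unfolding perms6_def by (elim conjE disjE) simp_all
  qed
  moreover have "\<forall>i<3. \<sigma> i = [a,b,c] ! i" unfolding all3 a_b_c_def by simp
  ultimately show ?thesis by blast
qed

lemma perm3_tsd: fixes x :: "nat \<Rightarrow> nat \<Rightarrow> 'a::comm_ring_1" assumes "\<sigma> permutes {..<3::nat}"
  shows "tf (\<lambda>i j. x (\<sigma> i) (\<sigma> j)) = tf x \<and> sf (\<lambda>i j. x (\<sigma> i) (\<sigma> j)) = sf x \<and> df (\<lambda>i j. x (\<sigma> i) (\<sigma> j)) = df x"
proof -
  obtain l where l: "l \<in> set perms6" "\<forall>i<3. \<sigma> i = l ! i" using perm3_list[OF assms] by blast
  have e: "\<sigma> 0 = l!0" "\<sigma> 1 = l!1" "\<sigma> 2 = l!2" using l(2) unfolding all3 by auto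
  show ?thesis using inv_tsd[OF l(1), of x] unfolding tf_def sf_def df_def e .
qed

lemma NN_perm1: assumes s: "\<sigma> permutes {..<3::nat}" and b: "\<forall>i<3. \<forall>j<3. b (\<sigma> i) (\<sigma> j) = c i j"
  and N: "NN TYPE('a::field) b" shows "NN TYPE('a) c"
proof -
  from N obtain x :: "nat \<Rightarrow> nat \<Rightarrow> 'a" where X: "\<forall>i<3. \<forall>j<3. (x i j \<noteq> 0) = b i j"
    and z: "tf x = 0" "sf x = 0" "df x = 0" unfolding NN_def by auto
  have lt: "\<sigma> i < 3" if "i < 3" for i using permutes_in_image[OF s] that by auto
  show ?thesis unfolding NN_def
  proof (rule exI[of _ "\<lambda>i j. x (\<sigma> i) (\<sigma> j)"], intro conjI allI impI)
    fix i j :: nat assume ij: "i < 3" "j < 3"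
    then have "\<sigma> i < 3" "\<sigma> j < 3" using lt by auto
    then have "(x (\<sigma> i) (\<sigma> j) \<noteq> 0) = b (\<sigma> i) (\<sigma> j)" using X by blast
    also have "\<dots> = c i j" using b ij by blast
    finally show "(x (\<sigma> i) (\<sigma> j) \<noteq> 0) = c i j" .
  qed (use z perm3_tsd[OF s, of x] in auto)
qed

lemma equiv_sym: assumes "equiv_pattern P Q" shows "equiv_pattern Q P"
proof -
  from assms obtain \<sigma> where d: "dim_row P = dim_row Q" "dim_col P = dim_row P" "dim_col Q = dim_row Q"
    and s: "\<sigma> permutes {..<dim_row P}" and e: "\<forall>i < dim_row P. \<forall>j < dim_row P. P $$ (\<sigma> i, \<sigma> j) = Q $$ (i, j)"
    unfolding equiv_pattern_def by blast
  have si: "Hilbert_Choice.inv \<sigma> permutes {..<dim_row P}" using permutes_inv[OF s] .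
  have lt: "Hilbert_Choice.inv \<sigma> i < dim_row P" if "i < dim_row P" for i using permutes_in_image[OF si] that by auto
  have "\<forall>i < dim_row Q. \<forall>j < dim_row Q. Q $$ (Hilbert_Choice.inv \<sigma> i, Hilbert_Choice.inv \<sigma> j) = P $$ (i, j)"
  proof (intro allI impI)
    fix i j assume "i < dim_row Q" "j < dim_row Q"
    then have "i < dim_row P" "j < dim_row P" using d by auto
    then have "P $$ (\<sigma> (Hilbert_Choice.inv \<sigma> i), \<sigma> (Hilbert_Choice.inv \<sigma> j)) = Q $$ (Hilbert_Choice.inv \<sigma> i, Hilbert_Choice.inv \<sigma> j)"
      using e lt by blast
    then show "Q $$ (Hilbert_Choice.inv \<sigma> i, Hilbert_Choice.inv \<sigma> j) = P $$ (i, j)"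
      using permutes_inverses(1)[OF s] by simp
  qed
  then show ?thesis unfolding equiv_pattern_def using d si by auto
qed

lemma equiv_trans: assumes "equiv_pattern P Q" "equiv_pattern Q R" shows "equiv_pattern P R"
proof -
  from assms(1) obtain \<sigma> where d: "dim_row P = dim_row Q" "dim_col P = dim_row P" "dim_col Q = dim_row Q"
    and s: "\<sigma> permutes {..<dim_row P}" and e: "\<forall>i < dim_row P. \<forall>j < dim_row P. P $$ (\<sigma> i, \<sigma> j) = Q $$ (i, j)"
    unfolding equiv_pattern_def by blast
  from assms(2) obtain \<tau> where d2: "dim_row Q = dim_row R" "dim_col R = dim_row R"
    and t: "\<tau> permutes {..<dim_row Q}" and e2: "\<forall>i < dim_row Q. \<forall>j < dim_row Q. Q $$ (\<tau> i, \<tau> j) = R $$ (i, j)"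
    unfolding equiv_pattern_def by blast
  have st: "\<sigma> \<circ> \<tau> permutes {..<dim_row P}" using permutes_compose[OF _ s] t d by simp
  have lt: "\<tau> i < dim_row P" if "i < dim_row P" for i using permutes_in_image[OF t] that d by auto
  have "\<forall>i < dim_row P. \<forall>j < dim_row P. P $$ ((\<sigma> \<circ> \<tau>) i, (\<sigma> \<circ> \<tau>) j) = R $$ (i, j)"
  proof (intro allI impI)
    fix i j assume ij: "i < dim_row P" "j < dim_row P"
    then have "P $$ (\<sigma> (\<tau> i), \<sigma> (\<tau> j)) = Q $$ (\<tau> i, \<tau> j)" using e lt by blast
    also have "\<dots> = R $$ (i, j)" 
    proof -
      have "i < dim_row Q" "j < dim_row Q" using ij d by auto
      then show ?thesis using e2 by blast
    qed
    finally show "P $$ ((\<sigma> \<circ> \<tau>) i, (\<sigma> \<circ> \<tau>) j) = R $$ (i, j)" by simp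
  qed
  moreover have "dim_row P = dim_row R" "dim_col P = dim_row P" "dim_col R = dim_row R" using d d2 by auto
  ultimately show ?thesis unfolding equiv_pattern_def using st by blast
qed

lemma pot_equiv: assumes P: "P \<in> carrier_mat 3 3" and C: "C \<in> carrier_mat 3 3" and E: "equiv_pattern P C"
  shows "pot_nilpotent TYPE('a::field) P \<longleftrightarrow> pot_nilpotent TYPE('a) C"
proof -
  have imp: "pot_nilpotent TYPE('a) Q" if Q1: "Q1 \<in> carrier_mat 3 3" and Q: "Q \<in> carrier_mat 3 3"
    and E: "equiv_pattern Q1 Q" and N: "pot_nilpotent TYPE('a) Q1" for Q1 Q
  proof -
    from E Q1 obtain \<sigma> where s: "\<sigma> permutes {..<3}" and e: "\<forall>i < 3. \<forall>j < 3. Q1 $$ (\<sigma> i, \<sigma> j) = Q $$ (i, j)"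
      unfolding equiv_pattern_def by auto
    have "NN TYPE('a) (\<lambda>i j. Q $$ (i, j))"
      by (rule NN_perm1[OF s _ N[unfolded pot_iff[OF Q1]]]) (use e in simp)
    then show ?thesis unfolding pot_iff[OF Q] .
  qed
  show ?thesis using imp[OF P C E] imp[OF C P equiv_sym[OF E]] by blast
qed


definition idx3 :: "nat list" where "idx3 = [0,1,2]"

definition eqlb :: "bool list list \<Rightarrow> bool list list \<Rightarrow> bool" where
  "eqlb rs qs = list_ex (\<lambda>l. list_all (\<lambda>i. list_all (\<lambda>j. rs!(l!i)!(l!j) = qs!i!j) idx3) idx3) perms6"

definition irl :: "bool list list \<Rightarrow> bool" where
  "irl rs = list_all (\<lambda>i. list_all (\<lambda>j. i = j \<or> rs!i!j \<or> list_ex (\<lambda>k. rs!i!k \<and> rs!k!j) idx3) idx3) idx3"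

definition L1r :: "bool list list list" where
  "L1r = [[[Z,S,Z],[S,Z,S],[Z,S,Z]],
     [[S,S,Z],[S,Z,S],[S,Z,S]],
     [[Z,S,Z],[S,S,S],[S,Z,S]],
     [[S,S,S],[S,S,S],[S,S,Z]]]"
definition L2r :: "bool list list list" where
  "L2r = [[[S,S,Z],[S,Z,S],[Z,S,S]],
     [[S,S,S],[S,S,S],[S,Z,Z]],
     [[S,S,S],[S,Z,S],[S,Z,S]],
     [[S,S,S],[S,S,S],[S,Z,S]],
     [[Z,S,S],[S,Z,S],[S,S,Z]],
     [[S,S,S],[S,S,S],[S,S,S]]]"
definition L3r :: "bool list list list" where
  "L3r = [[[S,S,Z],[S,S,S],[Z,S,S]],
     [[S,S,Z],[S,S,S],[S,Z,S]],
     [[Z,S,S],[S,S,S],[S,Z,S]]]"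
definition P4r :: "bool list list" where
  "P4r = [[S,S,Z],[Z,S,S],[S,Z,S]]"
definition NVr :: "bool list list list" where
  "NVr = [[[False,False,True],[False,False,True],[True,True,True]],
    [[False,False,True],[False,True,True],[True,True,False]],
    [[False,False,True],[False,True,True],[True,True,True]],
    [[False,False,True],[True,False,False],[False,True,False]],
    [[False,False,True],[True,False,False],[False,True,True]],
    [[False,False,True],[True,False,False],[True,True,False]],
    [[False,False,True],[True,False,False],[True,True,True]],
    [[False,False,True],[True,False,True],[False,True,True]],
    [[False,False,True],[True,False,True],[True,True,False]],
    [[False,False,True],[True,False,True],[True,True,True]],
    [[False,False,True],[True,True,False],[False,True,True]],
    [[False,False,True],[True,True,False],[True,True,False]],
    [[False,False,True],[True,True,True],[False,True,True]],
    [[False,False,True],[True,True,True],[True,True,False]],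
    [[False,True,True],[False,True,True],[True,True,False]],
    [[False,True,True],[True,False,True],[True,True,True]]]"

definition reps :: "bool list list list" where "reps = L1r @ L2r @ L3r @ [P4r] @ NVr"


lemma numeral_mr_zero: "(numeral n :: 'p::prime_card mod_ring) = 0 \<longleftrightarrow> CARD('p) dvd numeral n"
proof -
  have "(numeral n :: 'p mod_ring) = of_nat (numeral n)" by simp
  then show ?thesis using of_nat_eq_0_iff_char_dvd[where 'a="'p mod_ring" and n="numeral n"] by simp
qed

lemma F2: assumes "CARD('p::prime_card) = 2" "(x :: 'p mod_ring) \<noteq> 0" shows "x = 1"
proof -
  obtain i where "i < CARD('p)" "x = of_nat i" using surj_of_nat_mod_ring by blast
  with assms show ?thesis by (cases i) auto
qed

lemma F3: assumes "CARD('p::prime_card) = 3" "(x :: 'p mod_ring) \<noteq> 0" shows "x = 1 \<or> x = -1"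
proof -
  obtain i where i: "i < CARD('p)" "x = of_nat i" using surj_of_nat_mod_ring by blast
  have "(3 :: 'p mod_ring) = 0" using numeral_mr_zero[where 'p='p and n="num.Bit1 num.One"] assms by simp
  then have "(2 :: 'p mod_ring) = -1" by (simp add: eq_neg_iff_add_eq_0)
  with i assms show ?thesis by (auto simp: less_Suc_eq numeral_3_eq_3 numeral_2_eq_2)
qed

lemma two_nz: assumes "CARD('p::prime_card) \<noteq> 2" shows "(2 :: 'p mod_ring) \<noteq> 0"
proof
  assume "(2 :: 'p mod_ring) = 0"
  then have "CARD('p) dvd 2" using numeral_mr_zero[where 'p='p and n="num.Bit0 num.One"] by simp
  then have "CARD('p) \<le> 2" using dvd_imp_le by auto
  moreover have "CARD('p) \<ge> 2" using prime_ge_2_nat[OF prime_card[where 'a='p]] .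
  ultimately show False using assms by simp
qed

lemma three_nz: assumes "CARD('p::prime_card) \<noteq> 3" shows "(3 :: 'p mod_ring) \<noteq> 0"
proof
  assume "(3 :: 'p mod_ring) = 0"
  then have d: "CARD('p) dvd 3" using numeral_mr_zero[where 'p='p and n="num.Bit1 num.One"] by simp
  then have "CARD('p) \<le> 3" using dvd_imp_le by auto
  moreover have "CARD('p) \<ge> 2" using prime_ge_2_nat[OF prime_card[where 'a='p]] .
  ultimately have "CARD('p) = 2" using assms by simp
  with d show False by simp
qed

lemma four_nz: "CARD('p::prime_card) \<noteq> 2 \<Longrightarrow> (4 :: 'p mod_ring) \<noteq> 0"
proof -
  assume "CARD('p) \<noteq> 2"
  then have t: "(2 :: 'p mod_ring) \<noteq> 0" by (rule two_nz)
  have "(2 :: 'p mod_ring) * 2 \<noteq> 0" by (rule no_zero_divisors[OF t t])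
  moreover have "(4 :: 'p mod_ring) = 2 * 2" by simp
  ultimately show ?thesis by metis
qed

lemma prod3: "[:-a,1:]*[:-b,1:]*[:-c,1:] = [:-(a*b*c), a*b+a*c+b*c, -(a+b+c), (1::'a::comm_ring_1):]"
  by (simp add: algebra_simps)

lemma nv_0: shows "\<not> NN TYPE('a::field) (\<lambda>i j. [[Z,Z,S],[Z,Z,S],[S,S,S]]!i!j)"
proof
  assume "NN TYPE('a::field) (\<lambda>i j. [[Z,Z,S],[Z,Z,S],[S,S,S]]!i!j)"
  then obtain x :: "nat \<Rightarrow> nat \<Rightarrow> 'a::field" where X: "\<forall>i<3. \<forall>j<3. (x i j \<noteq> 0) = [[Z,Z,S],[Z,Z,S],[S,S,S]]!i!j"
    and z: "tf x = 0" "sf x = 0" "df x = 0" unfolding NN_def by blast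
  have f: "x 0 0 = 0" "x 0 (Suc 0) = 0" "x 0 2 \<noteq> 0" "x (Suc 0) 0 = 0" "x (Suc 0) (Suc 0) = 0" "x (Suc 0) 2 \<noteq> 0" "x 2 0 \<noteq> 0" "x 2 (Suc 0) \<noteq> 0" "x 2 2 \<noteq> 0" using X by (simp_all add: all3)
  show False using z unfolding tf_def sf_def df_def by (simp add: f)
qed

lemma nv_1: shows "\<not> NN TYPE('a::field) (\<lambda>i j. [[Z,Z,S],[Z,S,S],[S,S,Z]]!i!j)"
proof
  assume "NN TYPE('a::field) (\<lambda>i j. [[Z,Z,S],[Z,S,S],[S,S,Z]]!i!j)"
  then obtain x :: "nat \<Rightarrow> nat \<Rightarrow> 'a::field" where X: "\<forall>i<3. \<forall>j<3. (x i j \<noteq> 0) = [[Z,Z,S],[Z,S,S],[S,S,Z]]!i!j"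
    and z: "tf x = 0" "sf x = 0" "df x = 0" unfolding NN_def by blast
  have f: "x 0 0 = 0" "x 0 (Suc 0) = 0" "x 0 2 \<noteq> 0" "x (Suc 0) 0 = 0" "x (Suc 0) (Suc 0) \<noteq> 0" "x (Suc 0) 2 \<noteq> 0" "x 2 0 \<noteq> 0" "x 2 (Suc 0) \<noteq> 0" "x 2 2 = 0" using X by (simp_all add: all3)
  show False using z unfolding tf_def sf_def df_def by (simp add: f)
qed

lemma nv_2: shows "\<not> NN TYPE('a::field) (\<lambda>i j. [[Z,Z,S],[Z,S,S],[S,S,S]]!i!j)"
proof
  assume "NN TYPE('a::field) (\<lambda>i j. [[Z,Z,S],[Z,S,S],[S,S,S]]!i!j)"
  then obtain x :: "nat \<Rightarrow> nat \<Rightarrow> 'a::field" where X: "\<forall>i<3. \<forall>j<3. (x i j \<noteq> 0) = [[Z,Z,S],[Z,S,S],[S,S,S]]!i!j"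
    and z: "tf x = 0" "sf x = 0" "df x = 0" unfolding NN_def by blast
  have f: "x 0 0 = 0" "x 0 (Suc 0) = 0" "x 0 2 \<noteq> 0" "x (Suc 0) 0 = 0" "x (Suc 0) (Suc 0) \<noteq> 0" "x (Suc 0) 2 \<noteq> 0" "x 2 0 \<noteq> 0" "x 2 (Suc 0) \<noteq> 0" "x 2 2 \<noteq> 0" using X by (simp_all add: all3)
  show False using z unfolding tf_def sf_def df_def by (simp add: f)
qed

lemma nv_3: shows "\<not> NN TYPE('a::field) (\<lambda>i j. [[Z,Z,S],[S,Z,Z],[Z,S,Z]]!i!j)"
proof
  assume "NN TYPE('a::field) (\<lambda>i j. [[Z,Z,S],[S,Z,Z],[Z,S,Z]]!i!j)"
  then obtain x :: "nat \<Rightarrow> nat \<Rightarrow> 'a::field" where X: "\<forall>i<3. \<forall>j<3. (x i j \<noteq> 0) = [[Z,Z,S],[S,Z,Z],[Z,S,Z]]!i!j"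
    and z: "tf x = 0" "sf x = 0" "df x = 0" unfolding NN_def by blast
  have f: "x 0 0 = 0" "x 0 (Suc 0) = 0" "x 0 2 \<noteq> 0" "x (Suc 0) 0 \<noteq> 0" "x (Suc 0) (Suc 0) = 0" "x (Suc 0) 2 = 0" "x 2 0 = 0" "x 2 (Suc 0) \<noteq> 0" "x 2 2 = 0" using X by (simp_all add: all3)
  show False using z unfolding tf_def sf_def df_def by (simp add: f)
qed

lemma nv_4: shows "\<not> NN TYPE('a::field) (\<lambda>i j. [[Z,Z,S],[S,Z,Z],[Z,S,S]]!i!j)"
proof
  assume "NN TYPE('a::field) (\<lambda>i j. [[Z,Z,S],[S,Z,Z],[Z,S,S]]!i!j)"
  then obtain x :: "nat \<Rightarrow> nat \<Rightarrow> 'a::field" where X: "\<forall>i<3. \<forall>j<3. (x i j \<noteq> 0) = [[Z,Z,S],[S,Z,Z],[Z,S,S]]!i!j"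
    and z: "tf x = 0" "sf x = 0" "df x = 0" unfolding NN_def by blast
  have f: "x 0 0 = 0" "x 0 (Suc 0) = 0" "x 0 2 \<noteq> 0" "x (Suc 0) 0 \<noteq> 0" "x (Suc 0) (Suc 0) = 0" "x (Suc 0) 2 = 0" "x 2 0 = 0" "x 2 (Suc 0) \<noteq> 0" "x 2 2 \<noteq> 0" using X by (simp_all add: all3)
  show False using z unfolding tf_def sf_def df_def by (simp add: f)
qed

lemma nv_5: shows "\<not> NN TYPE('a::field) (\<lambda>i j. [[Z,Z,S],[S,Z,Z],[S,S,Z]]!i!j)"
proof
  assume "NN TYPE('a::field) (\<lambda>i j. [[Z,Z,S],[S,Z,Z],[S,S,Z]]!i!j)"
  then obtain x :: "nat \<Rightarrow> nat \<Rightarrow> 'a::field" where X: "\<forall>i<3. \<forall>j<3. (x i j \<noteq> 0) = [[Z,Z,S],[S,Z,Z],[S,S,Z]]!i!j"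
    and z: "tf x = 0" "sf x = 0" "df x = 0" unfolding NN_def by blast
  have f: "x 0 0 = 0" "x 0 (Suc 0) = 0" "x 0 2 \<noteq> 0" "x (Suc 0) 0 \<noteq> 0" "x (Suc 0) (Suc 0) = 0" "x (Suc 0) 2 = 0" "x 2 0 \<noteq> 0" "x 2 (Suc 0) \<noteq> 0" "x 2 2 = 0" using X by (simp_all add: all3)
  show False using z unfolding tf_def sf_def df_def by (simp add: f)
qed

lemma nv_6: shows "\<not> NN TYPE('a::field) (\<lambda>i j. [[Z,Z,S],[S,Z,Z],[S,S,S]]!i!j)"
proof
  assume "NN TYPE('a::field) (\<lambda>i j. [[Z,Z,S],[S,Z,Z],[S,S,S]]!i!j)"
  then obtain x :: "nat \<Rightarrow> nat \<Rightarrow> 'a::field" where X: "\<forall>i<3. \<forall>j<3. (x i j \<noteq> 0) = [[Z,Z,S],[S,Z,Z],[S,S,S]]!i!j"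
    and z: "tf x = 0" "sf x = 0" "df x = 0" unfolding NN_def by blast
  have f: "x 0 0 = 0" "x 0 (Suc 0) = 0" "x 0 2 \<noteq> 0" "x (Suc 0) 0 \<noteq> 0" "x (Suc 0) (Suc 0) = 0" "x (Suc 0) 2 = 0" "x 2 0 \<noteq> 0" "x 2 (Suc 0) \<noteq> 0" "x 2 2 \<noteq> 0" using X by (simp_all add: all3)
  show False using z unfolding tf_def sf_def df_def by (simp add: f)
qed

lemma nv_7: shows "\<not> NN TYPE('a::field) (\<lambda>i j. [[Z,Z,S],[S,Z,S],[Z,S,S]]!i!j)"
proof
  assume "NN TYPE('a::field) (\<lambda>i j. [[Z,Z,S],[S,Z,S],[Z,S,S]]!i!j)"
  then obtain x :: "nat \<Rightarrow> nat \<Rightarrow> 'a::field" where X: "\<forall>i<3. \<forall>j<3. (x i j \<noteq> 0) = [[Z,Z,S],[S,Z,S],[Z,S,S]]!i!j"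
    and z: "tf x = 0" "sf x = 0" "df x = 0" unfolding NN_def by blast
  have f: "x 0 0 = 0" "x 0 (Suc 0) = 0" "x 0 2 \<noteq> 0" "x (Suc 0) 0 \<noteq> 0" "x (Suc 0) (Suc 0) = 0" "x (Suc 0) 2 \<noteq> 0" "x 2 0 = 0" "x 2 (Suc 0) \<noteq> 0" "x 2 2 \<noteq> 0" using X by (simp_all add: all3)
  show False using z unfolding tf_def sf_def df_def by (simp add: f)
qed

lemma nv_8: shows "\<not> NN TYPE('a::field) (\<lambda>i j. [[Z,Z,S],[S,Z,S],[S,S,Z]]!i!j)"
proof
  assume "NN TYPE('a::field) (\<lambda>i j. [[Z,Z,S],[S,Z,S],[S,S,Z]]!i!j)"
  then obtain x :: "nat \<Rightarrow> nat \<Rightarrow> 'a::field" where X: "\<forall>i<3. \<forall>j<3. (x i j \<noteq> 0) = [[Z,Z,S],[S,Z,S],[S,S,Z]]!i!j"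
    and z: "tf x = 0" "sf x = 0" "df x = 0" unfolding NN_def by blast
  have f: "x 0 0 = 0" "x 0 (Suc 0) = 0" "x 0 2 \<noteq> 0" "x (Suc 0) 0 \<noteq> 0" "x (Suc 0) (Suc 0) = 0" "x (Suc 0) 2 \<noteq> 0" "x 2 0 \<noteq> 0" "x 2 (Suc 0) \<noteq> 0" "x 2 2 = 0" using X by (simp_all add: all3)
  show False using z unfolding tf_def sf_def df_def by (simp add: f)
qed

lemma nv_9: shows "\<not> NN TYPE('a::field) (\<lambda>i j. [[Z,Z,S],[S,Z,S],[S,S,S]]!i!j)"
proof
  assume "NN TYPE('a::field) (\<lambda>i j. [[Z,Z,S],[S,Z,S],[S,S,S]]!i!j)"
  then obtain x :: "nat \<Rightarrow> nat \<Rightarrow> 'a::field" where X: "\<forall>i<3. \<forall>j<3. (x i j \<noteq> 0) = [[Z,Z,S],[S,Z,S],[S,S,S]]!i!j"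
    and z: "tf x = 0" "sf x = 0" "df x = 0" unfolding NN_def by blast
  have f: "x 0 0 = 0" "x 0 (Suc 0) = 0" "x 0 2 \<noteq> 0" "x (Suc 0) 0 \<noteq> 0" "x (Suc 0) (Suc 0) = 0" "x (Suc 0) 2 \<noteq> 0" "x 2 0 \<noteq> 0" "x 2 (Suc 0) \<noteq> 0" "x 2 2 \<noteq> 0" using X by (simp_all add: all3)
  show False using z unfolding tf_def sf_def df_def by (simp add: f)
qed

lemma nv_10: shows "\<not> NN TYPE('a::field) (\<lambda>i j. [[Z,Z,S],[S,S,Z],[Z,S,S]]!i!j)"
proof
  assume "NN TYPE('a::field) (\<lambda>i j. [[Z,Z,S],[S,S,Z],[Z,S,S]]!i!j)"
  then obtain x :: "nat \<Rightarrow> nat \<Rightarrow> 'a::field" where X: "\<forall>i<3. \<forall>j<3. (x i j \<noteq> 0) = [[Z,Z,S],[S,S,Z],[Z,S,S]]!i!j"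
    and z: "tf x = 0" "sf x = 0" "df x = 0" unfolding NN_def by blast
  have f: "x 0 0 = 0" "x 0 (Suc 0) = 0" "x 0 2 \<noteq> 0" "x (Suc 0) 0 \<noteq> 0" "x (Suc 0) (Suc 0) \<noteq> 0" "x (Suc 0) 2 = 0" "x 2 0 = 0" "x 2 (Suc 0) \<noteq> 0" "x 2 2 \<noteq> 0" using X by (simp_all add: all3)
  show False using z unfolding tf_def sf_def df_def by (simp add: f)
qed

lemma nv_11: shows "\<not> NN TYPE('a::field) (\<lambda>i j. [[Z,Z,S],[S,S,Z],[S,S,Z]]!i!j)"
proof
  assume "NN TYPE('a::field) (\<lambda>i j. [[Z,Z,S],[S,S,Z],[S,S,Z]]!i!j)"
  then obtain x :: "nat \<Rightarrow> nat \<Rightarrow> 'a::field" where X: "\<forall>i<3. \<forall>j<3. (x i j \<noteq> 0) = [[Z,Z,S],[S,S,Z],[S,S,Z]]!i!j"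
    and z: "tf x = 0" "sf x = 0" "df x = 0" unfolding NN_def by blast
  have f: "x 0 0 = 0" "x 0 (Suc 0) = 0" "x 0 2 \<noteq> 0" "x (Suc 0) 0 \<noteq> 0" "x (Suc 0) (Suc 0) \<noteq> 0" "x (Suc 0) 2 = 0" "x 2 0 \<noteq> 0" "x 2 (Suc 0) \<noteq> 0" "x 2 2 = 0" using X by (simp_all add: all3)
  show False using z unfolding tf_def sf_def df_def by (simp add: f)
qed

lemma nv_12: shows "\<not> NN TYPE('a::field) (\<lambda>i j. [[Z,Z,S],[S,S,S],[Z,S,S]]!i!j)"
proof
  assume "NN TYPE('a::field) (\<lambda>i j. [[Z,Z,S],[S,S,S],[Z,S,S]]!i!j)"
  then obtain x :: "nat \<Rightarrow> nat \<Rightarrow> 'a::field" where X: "\<forall>i<3. \<forall>j<3. (x i j \<noteq> 0) = [[Z,Z,S],[S,S,S],[Z,S,S]]!i!j"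
    and z: "tf x = 0" "sf x = 0" "df x = 0" unfolding NN_def by blast
  have f: "x 0 0 = 0" "x 0 (Suc 0) = 0" "x 0 2 \<noteq> 0" "x (Suc 0) 0 \<noteq> 0" "x (Suc 0) (Suc 0) \<noteq> 0" "x (Suc 0) 2 \<noteq> 0" "x 2 0 = 0" "x 2 (Suc 0) \<noteq> 0" "x 2 2 \<noteq> 0" using X by (simp_all add: all3)
  show False using z unfolding tf_def sf_def df_def by (simp add: f)
qed

lemma nv_13: shows "\<not> NN TYPE('a::field) (\<lambda>i j. [[Z,Z,S],[S,S,S],[S,S,Z]]!i!j)"
proof
  assume "NN TYPE('a::field) (\<lambda>i j. [[Z,Z,S],[S,S,S],[S,S,Z]]!i!j)"
  then obtain x :: "nat \<Rightarrow> nat \<Rightarrow> 'a::field" where X: "\<forall>i<3. \<forall>j<3. (x i j \<noteq> 0) = [[Z,Z,S],[S,S,S],[S,S,Z]]!i!j"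
    and z: "tf x = 0" "sf x = 0" "df x = 0" unfolding NN_def by blast
  have f: "x 0 0 = 0" "x 0 (Suc 0) = 0" "x 0 2 \<noteq> 0" "x (Suc 0) 0 \<noteq> 0" "x (Suc 0) (Suc 0) \<noteq> 0" "x (Suc 0) 2 \<noteq> 0" "x 2 0 \<noteq> 0" "x 2 (Suc 0) \<noteq> 0" "x 2 2 = 0" using X by (simp_all add: all3)
  show False using z unfolding tf_def sf_def df_def by (simp add: f)
qed

lemma nv_14: shows "\<not> NN TYPE('a::field) (\<lambda>i j. [[Z,S,S],[Z,S,S],[S,S,Z]]!i!j)"
proof
  assume "NN TYPE('a::field) (\<lambda>i j. [[Z,S,S],[Z,S,S],[S,S,Z]]!i!j)"
  then obtain x :: "nat \<Rightarrow> nat \<Rightarrow> 'a::field" where X: "\<forall>i<3. \<forall>j<3. (x i j \<noteq> 0) = [[Z,S,S],[Z,S,S],[S,S,Z]]!i!j"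
    and z: "tf x = 0" "sf x = 0" "df x = 0" unfolding NN_def by blast
  have f: "x 0 0 = 0" "x 0 (Suc 0) \<noteq> 0" "x 0 2 \<noteq> 0" "x (Suc 0) 0 = 0" "x (Suc 0) (Suc 0) \<noteq> 0" "x (Suc 0) 2 \<noteq> 0" "x 2 0 \<noteq> 0" "x 2 (Suc 0) \<noteq> 0" "x 2 2 = 0" using X by (simp_all add: all3)
  show False using z unfolding tf_def sf_def df_def by (simp add: f)
qed

lemma nv_15: shows "\<not> NN TYPE('a::field) (\<lambda>i j. [[Z,S,S],[S,Z,S],[S,S,S]]!i!j)"
proof
  assume "NN TYPE('a::field) (\<lambda>i j. [[Z,S,S],[S,Z,S],[S,S,S]]!i!j)"
  then obtain x :: "nat \<Rightarrow> nat \<Rightarrow> 'a::field" where X: "\<forall>i<3. \<forall>j<3. (x i j \<noteq> 0) = [[Z,S,S],[S,Z,S],[S,S,S]]!i!j"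
    and z: "tf x = 0" "sf x = 0" "df x = 0" unfolding NN_def by blast
  have f: "x 0 0 = 0" "x 0 (Suc 0) \<noteq> 0" "x 0 2 \<noteq> 0" "x (Suc 0) 0 \<noteq> 0" "x (Suc 0) (Suc 0) = 0" "x (Suc 0) 2 \<noteq> 0" "x 2 0 \<noteq> 0" "x 2 (Suc 0) \<noteq> 0" "x 2 2 \<noteq> 0" using X by (simp_all add: all3)
  show False using z unfolding tf_def sf_def df_def by (simp add: f)
qed

lemma w1_0: shows "NN TYPE('a::field) (\<lambda>i j. [[Z,S,Z],[S,Z,S],[Z,S,Z]]!i!j)"
  unfolding NN_def
  by (rule exI[of _ "\<lambda>i j. [[0,1,0],[1,0,1],[0,-1,0]]!i!j"]) (simp add: all3 tf_def sf_def df_def )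

lemma w1_1: shows "NN TYPE('a::field) (\<lambda>i j. [[S,S,Z],[S,Z,S],[S,Z,S]]!i!j)"
  unfolding NN_def
  by (rule exI[of _ "\<lambda>i j. [[1,1,0],[-1,0,1],[1,0,-1]]!i!j"]) (simp add: all3 tf_def sf_def df_def )

lemma w1_2: shows "NN TYPE('a::field) (\<lambda>i j. [[Z,S,Z],[S,S,S],[S,Z,S]]!i!j)"
  unfolding NN_def
  by (rule exI[of _ "\<lambda>i j. [[0,1,0],[-1,1,1],[1,0,-1]]!i!j"]) (simp add: all3 tf_def sf_def df_def )

lemma w1_3: shows "NN TYPE('a::field) (\<lambda>i j. [[S,S,S],[S,S,S],[S,S,Z]]!i!j)"
  unfolding NN_def
  by (rule exI[of _ "\<lambda>i j. [[1,1,1],[-1,-1,-1],[1,1,0]]!i!j"]) (simp add: all3 tf_def sf_def df_def )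

lemma w2_0: assumes c: "CARD('p) \<noteq> 2" shows "NN TYPE('p::prime_card mod_ring) (\<lambda>i j. [[S,S,Z],[S,Z,S],[Z,S,S]]!i!j)"
  unfolding NN_def
  by (rule exI[of _ "\<lambda>i j. [[2,1,0],[-2,0,1],[0,-2,-2]]!i!j"]) (simp add: all3 tf_def sf_def df_def two_nz[OF c] four_nz[OF c])

lemma w2_1: assumes c: "CARD('p) \<noteq> 2" shows "NN TYPE('p::prime_card mod_ring) (\<lambda>i j. [[S,S,S],[S,S,S],[S,Z,Z]]!i!j)"
  unfolding NN_def
  by (rule exI[of _ "\<lambda>i j. [[1,1,1],[1,-1,-1],[-2,0,0]]!i!j"]) (simp add: all3 tf_def sf_def df_def two_nz[OF c] four_nz[OF c])

lemma w2_2: assumes c: "CARD('p) \<noteq> 2" shows "NN TYPE('p::prime_card mod_ring) (\<lambda>i j. [[S,S,S],[S,Z,S],[S,Z,S]]!i!j)"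
  unfolding NN_def
  by (rule exI[of _ "\<lambda>i j. [[1,1,1],[-2,0,2],[1,0,-1]]!i!j"]) (simp add: all3 tf_def sf_def df_def two_nz[OF c] four_nz[OF c])

lemma w2_3: assumes c: "CARD('p) \<noteq> 2" shows "NN TYPE('p::prime_card mod_ring) (\<lambda>i j. [[S,S,S],[S,S,S],[S,Z,S]]!i!j)"
  unfolding NN_def
  by (rule exI[of _ "\<lambda>i j. [[1,1,1],[-1,1,-1],[-2,0,-2]]!i!j"]) (simp add: all3 tf_def sf_def df_def two_nz[OF c] four_nz[OF c])

lemma w2_4: assumes c: "CARD('p) \<noteq> 2" shows "NN TYPE('p::prime_card mod_ring) (\<lambda>i j. [[Z,S,S],[S,Z,S],[S,S,Z]]!i!j)"
  unfolding NN_def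
  by (rule exI[of _ "\<lambda>i j. [[0,1,1],[2,0,2],[2,-2,0]]!i!j"]) (simp add: all3 tf_def sf_def df_def two_nz[OF c] four_nz[OF c])

lemma w2_5: assumes c: "CARD('p) \<noteq> 2" shows "NN TYPE('p::prime_card mod_ring) (\<lambda>i j. [[S,S,S],[S,S,S],[S,S,S]]!i!j)"
  unfolding NN_def
  by (rule exI[of _ "\<lambda>i j. [[1,1,1],[1,1,1],[-2,-2,-2]]!i!j"]) (simp add: all3 tf_def sf_def df_def two_nz[OF c] four_nz[OF c])

lemma w3_0: assumes c: "CARD('p) \<notin> {2,3}" shows "NN TYPE('p::prime_card mod_ring) (\<lambda>i j. [[S,S,Z],[S,S,S],[Z,S,S]]!i!j)"
proof -
  have c2: "CARD('p) \<noteq> 2" "CARD('p) \<noteq> 3" using c by auto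
  show ?thesis
  unfolding NN_def
  by (rule exI[of _ "\<lambda>i j. [[1,1,0],[1,-3,2],[0,-4,2]]!i!j"]) (simp add: all3 tf_def sf_def df_def two_nz[OF c2(1)] three_nz[OF c2(2)] four_nz[OF c2(1)])
qed

lemma w3_1: assumes c: "CARD('p) \<notin> {2,3}" shows "NN TYPE('p::prime_card mod_ring) (\<lambda>i j. [[S,S,Z],[S,S,S],[S,Z,S]]!i!j)"
proof -
  have c2: "CARD('p) \<noteq> 2" "CARD('p) \<noteq> 3" using c by auto
  show ?thesis
  unfolding NN_def
  by (rule exI[of _ "\<lambda>i j. [[1,1,0],[-3,-2,1],[-1,0,1]]!i!j"]) (simp add: all3 tf_def sf_def df_def two_nz[OF c2(1)] three_nz[OF c2(2)] four_nz[OF c2(1)])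
qed

lemma w3_2: assumes c: "CARD('p) \<notin> {2,3}" shows "NN TYPE('p::prime_card mod_ring) (\<lambda>i j. [[Z,S,S],[S,S,S],[S,Z,S]]!i!j)"
proof -
  have c2: "CARD('p) \<noteq> 2" "CARD('p) \<noteq> 3" using c by auto
  show ?thesis
  unfolding NN_def
  by (rule exI[of _ "\<lambda>i j. [[0,1,1],[-2,1,3],[1,0,-1]]!i!j"]) (simp add: all3 tf_def sf_def df_def two_nz[OF c2(1)] three_nz[OF c2(2)] four_nz[OF c2(1)])
qed

lemma n2_0: assumes c: "CARD('p::prime_card) = 2" shows "\<not> NN TYPE('p mod_ring) (\<lambda>i j. [[S,S,Z],[S,Z,S],[Z,S,S]]!i!j)"
proof
  assume "NN TYPE('p mod_ring) (\<lambda>i j. [[S,S,Z],[S,Z,S],[Z,S,S]]!i!j)"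
  then obtain x :: "nat \<Rightarrow> nat \<Rightarrow> 'p mod_ring" where X: "\<forall>i<3. \<forall>j<3. (x i j \<noteq> 0) = [[S,S,Z],[S,Z,S],[Z,S,S]]!i!j"
    and z: "tf x = 0" "sf x = 0" "df x = 0" unfolding NN_def by blast
  have f: "x 0 0 \<noteq> 0" "x 0 (Suc 0) \<noteq> 0" "x 0 2 = 0" "x (Suc 0) 0 \<noteq> 0" "x (Suc 0) (Suc 0) = 0" "x (Suc 0) 2 \<noteq> 0" "x 2 0 = 0" "x 2 (Suc 0) \<noteq> 0" "x 2 2 \<noteq> 0" using X by (simp_all add: all3)
  have o: "x 0 0 = 1" "x 0 (Suc 0) = 1" "x (Suc 0) 0 = 1" "x (Suc 0) 2 = 1" "x 2 (Suc 0) = 1" "x 2 2 = 1" using F2[OF c] f by blast+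
  show False using z unfolding tf_def sf_def df_def by (simp add: f o numeral_mr_zero c)
qed

lemma n2_1: assumes c: "CARD('p::prime_card) = 2" shows "\<not> NN TYPE('p mod_ring) (\<lambda>i j. [[S,S,S],[S,S,S],[S,Z,Z]]!i!j)"
proof
  assume "NN TYPE('p mod_ring) (\<lambda>i j. [[S,S,S],[S,S,S],[S,Z,Z]]!i!j)"
  then obtain x :: "nat \<Rightarrow> nat \<Rightarrow> 'p mod_ring" where X: "\<forall>i<3. \<forall>j<3. (x i j \<noteq> 0) = [[S,S,S],[S,S,S],[S,Z,Z]]!i!j"
    and z: "tf x = 0" "sf x = 0" "df x = 0" unfolding NN_def by blast
  have f: "x 0 0 \<noteq> 0" "x 0 (Suc 0) \<noteq> 0" "x 0 2 \<noteq> 0" "x (Suc 0) 0 \<noteq> 0" "x (Suc 0) (Suc 0) \<noteq> 0" "x (Suc 0) 2 \<noteq> 0" "x 2 0 \<noteq> 0" "x 2 (Suc 0) = 0" "x 2 2 = 0" using X by (simp_all add: all3)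
  have o: "x 0 0 = 1" "x 0 (Suc 0) = 1" "x 0 2 = 1" "x (Suc 0) 0 = 1" "x (Suc 0) (Suc 0) = 1" "x (Suc 0) 2 = 1" "x 2 0 = 1" using F2[OF c] f by blast+
  show False using z unfolding tf_def sf_def df_def by (simp add: f o numeral_mr_zero c)
qed

lemma n2_2: assumes c: "CARD('p::prime_card) = 2" shows "\<not> NN TYPE('p mod_ring) (\<lambda>i j. [[S,S,S],[S,Z,S],[S,Z,S]]!i!j)"
proof
  assume "NN TYPE('p mod_ring) (\<lambda>i j. [[S,S,S],[S,Z,S],[S,Z,S]]!i!j)"
  then obtain x :: "nat \<Rightarrow> nat \<Rightarrow> 'p mod_ring" where X: "\<forall>i<3. \<forall>j<3. (x i j \<noteq> 0) = [[S,S,S],[S,Z,S],[S,Z,S]]!i!j"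
    and z: "tf x = 0" "sf x = 0" "df x = 0" unfolding NN_def by blast
  have f: "x 0 0 \<noteq> 0" "x 0 (Suc 0) \<noteq> 0" "x 0 2 \<noteq> 0" "x (Suc 0) 0 \<noteq> 0" "x (Suc 0) (Suc 0) = 0" "x (Suc 0) 2 \<noteq> 0" "x 2 0 \<noteq> 0" "x 2 (Suc 0) = 0" "x 2 2 \<noteq> 0" using X by (simp_all add: all3)
  have o: "x 0 0 = 1" "x 0 (Suc 0) = 1" "x 0 2 = 1" "x (Suc 0) 0 = 1" "x (Suc 0) 2 = 1" "x 2 0 = 1" "x 2 2 = 1" using F2[OF c] f by blast+
  show False using z unfolding tf_def sf_def df_def by (simp add: f o numeral_mr_zero c)
qed

lemma n2_3: assumes c: "CARD('p::prime_card) = 2" shows "\<not> NN TYPE('p mod_ring) (\<lambda>i j. [[S,S,S],[S,S,S],[S,Z,S]]!i!j)"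
proof
  assume "NN TYPE('p mod_ring) (\<lambda>i j. [[S,S,S],[S,S,S],[S,Z,S]]!i!j)"
  then obtain x :: "nat \<Rightarrow> nat \<Rightarrow> 'p mod_ring" where X: "\<forall>i<3. \<forall>j<3. (x i j \<noteq> 0) = [[S,S,S],[S,S,S],[S,Z,S]]!i!j"
    and z: "tf x = 0" "sf x = 0" "df x = 0" unfolding NN_def by blast
  have f: "x 0 0 \<noteq> 0" "x 0 (Suc 0) \<noteq> 0" "x 0 2 \<noteq> 0" "x (Suc 0) 0 \<noteq> 0" "x (Suc 0) (Suc 0) \<noteq> 0" "x (Suc 0) 2 \<noteq> 0" "x 2 0 \<noteq> 0" "x 2 (Suc 0) = 0" "x 2 2 \<noteq> 0" using X by (simp_all add: all3)
  have o: "x 0 0 = 1" "x 0 (Suc 0) = 1" "x 0 2 = 1" "x (Suc 0) 0 = 1" "x (Suc 0) (Suc 0) = 1" "x (Suc 0) 2 = 1" "x 2 0 = 1" "x 2 2 = 1" using F2[OF c] f by blast+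
  show False using z unfolding tf_def sf_def df_def by (simp add: f o numeral_mr_zero c)
qed

lemma n2_4: assumes c: "CARD('p::prime_card) = 2" shows "\<not> NN TYPE('p mod_ring) (\<lambda>i j. [[Z,S,S],[S,Z,S],[S,S,Z]]!i!j)"
proof
  assume "NN TYPE('p mod_ring) (\<lambda>i j. [[Z,S,S],[S,Z,S],[S,S,Z]]!i!j)"
  then obtain x :: "nat \<Rightarrow> nat \<Rightarrow> 'p mod_ring" where X: "\<forall>i<3. \<forall>j<3. (x i j \<noteq> 0) = [[Z,S,S],[S,Z,S],[S,S,Z]]!i!j"
    and z: "tf x = 0" "sf x = 0" "df x = 0" unfolding NN_def by blast
  have f: "x 0 0 = 0" "x 0 (Suc 0) \<noteq> 0" "x 0 2 \<noteq> 0" "x (Suc 0) 0 \<noteq> 0" "x (Suc 0) (Suc 0) = 0" "x (Suc 0) 2 \<noteq> 0" "x 2 0 \<noteq> 0" "x 2 (Suc 0) \<noteq> 0" "x 2 2 = 0" using X by (simp_all add: all3)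
  have o: "x 0 (Suc 0) = 1" "x 0 2 = 1" "x (Suc 0) 0 = 1" "x (Suc 0) 2 = 1" "x 2 0 = 1" "x 2 (Suc 0) = 1" using F2[OF c] f by blast+
  show False using z unfolding tf_def sf_def df_def by (simp add: f o numeral_mr_zero c)
qed

lemma n2_5: assumes c: "CARD('p::prime_card) = 2" shows "\<not> NN TYPE('p mod_ring) (\<lambda>i j. [[S,S,S],[S,S,S],[S,S,S]]!i!j)"
proof
  assume "NN TYPE('p mod_ring) (\<lambda>i j. [[S,S,S],[S,S,S],[S,S,S]]!i!j)"
  then obtain x :: "nat \<Rightarrow> nat \<Rightarrow> 'p mod_ring" where X: "\<forall>i<3. \<forall>j<3. (x i j \<noteq> 0) = [[S,S,S],[S,S,S],[S,S,S]]!i!j"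
    and z: "tf x = 0" "sf x = 0" "df x = 0" unfolding NN_def by blast
  have f: "x 0 0 \<noteq> 0" "x 0 (Suc 0) \<noteq> 0" "x 0 2 \<noteq> 0" "x (Suc 0) 0 \<noteq> 0" "x (Suc 0) (Suc 0) \<noteq> 0" "x (Suc 0) 2 \<noteq> 0" "x 2 0 \<noteq> 0" "x 2 (Suc 0) \<noteq> 0" "x 2 2 \<noteq> 0" using X by (simp_all add: all3)
  have o: "x 0 0 = 1" "x 0 (Suc 0) = 1" "x 0 2 = 1" "x (Suc 0) 0 = 1" "x (Suc 0) (Suc 0) = 1" "x (Suc 0) 2 = 1" "x 2 0 = 1" "x 2 (Suc 0) = 1" "x 2 2 = 1" using F2[OF c] f by blast+
  show False using z unfolding tf_def sf_def df_def by (simp add: f o numeral_mr_zero c)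
qed

lemma m2_0: assumes c: "CARD('p::prime_card) = 2" shows "\<not> NN TYPE('p mod_ring) (\<lambda>i j. [[S,S,Z],[S,S,S],[Z,S,S]]!i!j)"
proof
  assume "NN TYPE('p mod_ring) (\<lambda>i j. [[S,S,Z],[S,S,S],[Z,S,S]]!i!j)"
  then obtain x :: "nat \<Rightarrow> nat \<Rightarrow> 'p mod_ring" where X: "\<forall>i<3. \<forall>j<3. (x i j \<noteq> 0) = [[S,S,Z],[S,S,S],[Z,S,S]]!i!j"
    and z: "tf x = 0" "sf x = 0" "df x = 0" unfolding NN_def by blast
  have f: "x 0 0 \<noteq> 0" "x 0 (Suc 0) \<noteq> 0" "x 0 2 = 0" "x (Suc 0) 0 \<noteq> 0" "x (Suc 0) (Suc 0) \<noteq> 0" "x (Suc 0) 2 \<noteq> 0" "x 2 0 = 0" "x 2 (Suc 0) \<noteq> 0" "x 2 2 \<noteq> 0" using X by (simp_all add: all3)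
  have o: "x 0 0 = 1" "x 0 (Suc 0) = 1" "x (Suc 0) 0 = 1" "x (Suc 0) (Suc 0) = 1" "x (Suc 0) 2 = 1" "x 2 (Suc 0) = 1" "x 2 2 = 1" using F2[OF c] f by blast+
  show False using z unfolding tf_def sf_def df_def by (simp add: f o numeral_mr_zero c)
qed

lemma m2_1: assumes c: "CARD('p::prime_card) = 2" shows "\<not> NN TYPE('p mod_ring) (\<lambda>i j. [[S,S,Z],[S,S,S],[S,Z,S]]!i!j)"
proof
  assume "NN TYPE('p mod_ring) (\<lambda>i j. [[S,S,Z],[S,S,S],[S,Z,S]]!i!j)"
  then obtain x :: "nat \<Rightarrow> nat \<Rightarrow> 'p mod_ring" where X: "\<forall>i<3. \<forall>j<3. (x i j \<noteq> 0) = [[S,S,Z],[S,S,S],[S,Z,S]]!i!j"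
    and z: "tf x = 0" "sf x = 0" "df x = 0" unfolding NN_def by blast
  have f: "x 0 0 \<noteq> 0" "x 0 (Suc 0) \<noteq> 0" "x 0 2 = 0" "x (Suc 0) 0 \<noteq> 0" "x (Suc 0) (Suc 0) \<noteq> 0" "x (Suc 0) 2 \<noteq> 0" "x 2 0 \<noteq> 0" "x 2 (Suc 0) = 0" "x 2 2 \<noteq> 0" using X by (simp_all add: all3)
  have o: "x 0 0 = 1" "x 0 (Suc 0) = 1" "x (Suc 0) 0 = 1" "x (Suc 0) (Suc 0) = 1" "x (Suc 0) 2 = 1" "x 2 0 = 1" "x 2 2 = 1" using F2[OF c] f by blast+
  show False using z unfolding tf_def sf_def df_def by (simp add: f o numeral_mr_zero c)
qed

lemma m2_2: assumes c: "CARD('p::prime_card) = 2" shows "\<not> NN TYPE('p mod_ring) (\<lambda>i j. [[Z,S,S],[S,S,S],[S,Z,S]]!i!j)"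
proof
  assume "NN TYPE('p mod_ring) (\<lambda>i j. [[Z,S,S],[S,S,S],[S,Z,S]]!i!j)"
  then obtain x :: "nat \<Rightarrow> nat \<Rightarrow> 'p mod_ring" where X: "\<forall>i<3. \<forall>j<3. (x i j \<noteq> 0) = [[Z,S,S],[S,S,S],[S,Z,S]]!i!j"
    and z: "tf x = 0" "sf x = 0" "df x = 0" unfolding NN_def by blast
  have f: "x 0 0 = 0" "x 0 (Suc 0) \<noteq> 0" "x 0 2 \<noteq> 0" "x (Suc 0) 0 \<noteq> 0" "x (Suc 0) (Suc 0) \<noteq> 0" "x (Suc 0) 2 \<noteq> 0" "x 2 0 \<noteq> 0" "x 2 (Suc 0) = 0" "x 2 2 \<noteq> 0" using X by (simp_all add: all3)
  have o: "x 0 (Suc 0) = 1" "x 0 2 = 1" "x (Suc 0) 0 = 1" "x (Suc 0) (Suc 0) = 1" "x (Suc 0) 2 = 1" "x 2 0 = 1" "x 2 2 = 1" using F2[OF c] f by blast+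
  show False using z unfolding tf_def sf_def df_def by (simp add: f o numeral_mr_zero c)
qed

lemma m3_0: assumes c: "CARD('p::prime_card) = 3" shows "\<not> NN TYPE('p mod_ring) (\<lambda>i j. [[S,S,Z],[S,S,S],[Z,S,S]]!i!j)"
proof
  assume "NN TYPE('p mod_ring) (\<lambda>i j. [[S,S,Z],[S,S,S],[Z,S,S]]!i!j)"
  then obtain x :: "nat \<Rightarrow> nat \<Rightarrow> 'p mod_ring" where X: "\<forall>i<3. \<forall>j<3. (x i j \<noteq> 0) = [[S,S,Z],[S,S,S],[Z,S,S]]!i!j"
    and z: "tf x = 0" "sf x = 0" "df x = 0" unfolding NN_def by blast
  have f: "x 0 0 \<noteq> 0" "x 0 (Suc 0) \<noteq> 0" "x 0 2 = 0" "x (Suc 0) 0 \<noteq> 0" "x (Suc 0) (Suc 0) \<noteq> 0" "x (Suc 0) 2 \<noteq> 0" "x 2 0 = 0" "x 2 (Suc 0) \<noteq> 0" "x 2 2 \<noteq> 0" using X by (simp_all add: all3)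
  have o: "x 0 0 = 1 \<or> x 0 0 = -1" "x 0 (Suc 0) = 1 \<or> x 0 (Suc 0) = -1" "x (Suc 0) 0 = 1 \<or> x (Suc 0) 0 = -1" "x (Suc 0) (Suc 0) = 1 \<or> x (Suc 0) (Suc 0) = -1" "x (Suc 0) 2 = 1 \<or> x (Suc 0) 2 = -1" "x 2 (Suc 0) = 1 \<or> x 2 (Suc 0) = -1" "x 2 2 = 1 \<or> x 2 2 = -1" using F3[OF c] f by blast+
  show False using o z unfolding tf_def sf_def df_def by (elim disjE; simp add: f numeral_mr_zero c)
qed

lemma m3_1: assumes c: "CARD('p::prime_card) = 3" shows "\<not> NN TYPE('p mod_ring) (\<lambda>i j. [[S,S,Z],[S,S,S],[S,Z,S]]!i!j)"
proof
  assume "NN TYPE('p mod_ring) (\<lambda>i j. [[S,S,Z],[S,S,S],[S,Z,S]]!i!j)"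
  then obtain x :: "nat \<Rightarrow> nat \<Rightarrow> 'p mod_ring" where X: "\<forall>i<3. \<forall>j<3. (x i j \<noteq> 0) = [[S,S,Z],[S,S,S],[S,Z,S]]!i!j"
    and z: "tf x = 0" "sf x = 0" "df x = 0" unfolding NN_def by blast
  have f: "x 0 0 \<noteq> 0" "x 0 (Suc 0) \<noteq> 0" "x 0 2 = 0" "x (Suc 0) 0 \<noteq> 0" "x (Suc 0) (Suc 0) \<noteq> 0" "x (Suc 0) 2 \<noteq> 0" "x 2 0 \<noteq> 0" "x 2 (Suc 0) = 0" "x 2 2 \<noteq> 0" using X by (simp_all add: all3)
  have o: "x 0 0 = 1 \<or> x 0 0 = -1" "x 0 (Suc 0) = 1 \<or> x 0 (Suc 0) = -1" "x (Suc 0) 0 = 1 \<or> x (Suc 0) 0 = -1" "x (Suc 0) (Suc 0) = 1 \<or> x (Suc 0) (Suc 0) = -1" "x (Suc 0) 2 = 1 \<or> x (Suc 0) 2 = -1" "x 2 0 = 1 \<or> x 2 0 = -1" "x 2 2 = 1 \<or> x 2 2 = -1" using F3[OF c] f by blast+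
  show False using o z unfolding tf_def sf_def df_def by (elim disjE; simp add: f numeral_mr_zero c)
qed

lemma m3_2: assumes c: "CARD('p::prime_card) = 3" shows "\<not> NN TYPE('p mod_ring) (\<lambda>i j. [[Z,S,S],[S,S,S],[S,Z,S]]!i!j)"
proof
  assume "NN TYPE('p mod_ring) (\<lambda>i j. [[Z,S,S],[S,S,S],[S,Z,S]]!i!j)"
  then obtain x :: "nat \<Rightarrow> nat \<Rightarrow> 'p mod_ring" where X: "\<forall>i<3. \<forall>j<3. (x i j \<noteq> 0) = [[Z,S,S],[S,S,S],[S,Z,S]]!i!j"
    and z: "tf x = 0" "sf x = 0" "df x = 0" unfolding NN_def by blast
  have f: "x 0 0 = 0" "x 0 (Suc 0) \<noteq> 0" "x 0 2 \<noteq> 0" "x (Suc 0) 0 \<noteq> 0" "x (Suc 0) (Suc 0) \<noteq> 0" "x (Suc 0) 2 \<noteq> 0" "x 2 0 \<noteq> 0" "x 2 (Suc 0) = 0" "x 2 2 \<noteq> 0" using X by (simp_all add: all3)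
  have o: "x 0 (Suc 0) = 1 \<or> x 0 (Suc 0) = -1" "x 0 2 = 1 \<or> x 0 2 = -1" "x (Suc 0) 0 = 1 \<or> x (Suc 0) 0 = -1" "x (Suc 0) (Suc 0) = 1 \<or> x (Suc 0) (Suc 0) = -1" "x (Suc 0) 2 = 1 \<or> x (Suc 0) 2 = -1" "x 2 0 = 1 \<or> x 2 0 = -1" "x 2 2 = 1 \<or> x 2 2 = -1" using F3[OF c] f by blast+
  show False using o z unfolding tf_def sf_def df_def by (elim disjE; simp add: f numeral_mr_zero c)
qed

lemma p4_iff: "NN TYPE('a::field) (\<lambda>i j. [[S,S,Z],[Z,S,S],[S,Z,S]]!i!j) \<longleftrightarrow>
  (\<exists>a b c :: 'a. [:-1, 0, 0, 1:] = [:-a, 1:] * [:-b, 1:] * [:-c, 1:])"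
proof
  assume "NN TYPE('a) (\<lambda>i j. [[S,S,Z],[Z,S,S],[S,Z,S]]!i!j)"
  then obtain x :: "nat \<Rightarrow> nat \<Rightarrow> 'a" where X: "\<forall>i<3. \<forall>j<3. (x i j \<noteq> 0) = [[S,S,Z],[Z,S,S],[S,Z,S]]!i!j"
    and z: "tf x = 0" "sf x = 0" "df x = 0" unfolding NN_def by blast
  have f: "x 0 0 \<noteq> 0" "x 0 1 \<noteq> 0" "x 0 2 = 0" "x 1 0 = 0" "x 1 1 \<noteq> 0" "x 1 2 \<noteq> 0" "x 2 0 \<noteq> 0" "x 2 1 = 0" "x 2 2 \<noteq> 0"
    using X by (simp_all add: all3)
  define a where "a = x 0 0"
  define b where "b = x 1 1"
  define c where "c = x 2 2"
  have a0: "a \<noteq> 0" using f unfolding a_def by simp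
  have t: "a + b + c = 0" using z(1) unfolding tf_def a_def b_def c_def by simp
  have s: "a * b + a * c + b * c = 0" using z(2) f unfolding sf_def a_def b_def c_def by simp
  have cc: "c = - a - b" using t by (simp add: algebra_simps eq_neg_iff_add_eq_0)
  have "a * a + a * b + b * b = -(a * b + a * c + b * c)" unfolding cc by (simp add: algebra_simps)
  then have s': "a * a + a * b + b * b = 0" using s by simp
  have "a * a * a - a * b * c = a * (a * a + a * b + b * b)" unfolding cc by (simp add: algebra_simps)
  then have cube: "a * a * a = a * b * c" using s' by simp
  then have bc: "b * c = a * a" using a0 by (simp add: mult.assoc)
  show "\<exists>a b c :: 'a. [:-1, 0, 0, 1:] = [:-a, 1:] * [:-b, 1:] * [:-c, 1:]"
  proof (intro exI)
    have e1: "1 * (b / a) * (c / a) = 1" using bc a0 by (simp add: field_simps)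
    have "1 * (b / a) + 1 * (c / a) + b / a * (c / a) = (a * b + a * c + b * c) / (a * a)"
      using a0 by (simp add: field_simps)
    then have e2: "1 * (b / a) + 1 * (c / a) + b / a * (c / a) = 0" using s by simp
    have e3: "1 + b / a + c / a = 0" using t a0 by (simp add: field_simps)
    show "[:-1, 0, 0, 1:] = [:-1, 1:] * [:-(b/a), 1:] * [:-(c/a), 1:]"
      unfolding prod3 using e1 e2 e3 by simp
  qed
next
  assume "\<exists>a b c :: 'a. [:-1, 0, 0, 1:] = [:-a, 1:] * [:-b, 1:] * [:-c, 1:]"
  then obtain a b c :: 'a where "[:-1, 0, 0, 1:] = [:-a, 1:] * [:-b, 1:] * [:-c, 1:]" by blast
  then have h: "a * b * c = 1 \<and> a * b + a * c + b * c = 0 \<and> - a - b = c" unfolding prod3 by simp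
  have "a + b + c = a + b + (- a - b)" using h by simp
  also have "\<dots> = 0" by simp
  finally have e: "a * b * c = 1" "a * b + a * c + b * c = 0" "a + b + c = 0" using h by auto
  have nz: "a \<noteq> 0" "b \<noteq> 0" "c \<noteq> 0" using e(1) by auto
  show "NN TYPE('a) (\<lambda>i j. [[S,S,Z],[Z,S,S],[S,Z,S]]!i!j)"
    unfolding NN_def
  proof (rule exI[of _ "\<lambda>i j. [[a,1,0],[0,b,1],[-1,0,c]]!i!j"], intro conjI)
    show "\<forall>i<3. \<forall>j<3. ([[a,1,0],[0,b,1],[-1,0,c]]!i!j \<noteq> 0) = [[S,S,Z],[Z,S,S],[S,Z,S]]!i!j"
      using nz by (simp add: all3)
    show "tf (\<lambda>i j. [[a,1,0],[0,b,1],[-1,0,c]]!i!j) = 0" using e by (simp add: tf_def)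
    show "sf (\<lambda>i j. [[a,1,0],[0,b,1],[-1,0,c]]!i!j) = 0" using e by (simp add: sf_def)
    show "df (\<lambda>i j. [[a,1,0],[0,b,1],[-1,0,c]]!i!j) = 0" using e by (simp add: df_def algebra_simps)
  qed
qed

definition rowsm :: "bool mat \<Rightarrow> bool list list" where
  "rowsm P = [[P$$(0,0), P$$(0,1), P$$(0,2)], [P$$(1,0), P$$(1,1), P$$(1,2)], [P$$(2,0), P$$(2,1), P$$(2,2)]]"

lemma rowsm_nth: assumes "a < 3" "b < 3" shows "rowsm P ! a ! b = P $$ (a,b)"
proof -
  from assms have "(a = 0 \<or> a = 1 \<or> a = 2) \<and> (b = 0 \<or> b = 1 \<or> b = 2)" by auto
  then show ?thesis unfolding rowsm_def by (elim conjE disjE) simp_all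
qed

lemma eqlb_iff: "eqlb rs qs \<longleftrightarrow> (\<exists>l\<in>set perms6. \<forall>i<3. \<forall>j<3. rs!(l!i)!(l!j) = qs!i!j)"
  unfolding eqlb_def list_ex_iff list_all_iff idx3_def all3 by simp

lemma perms6_permutes: assumes l: "l \<in> set perms6"
  shows "(\<lambda>i. if i < 3 then l ! i else i) permutes {..<3::nat}"
proof (rule bij_imp_permutes)
  have L: "{..<3::nat} = {0,1,2}" by auto
  from l have "l = [0,1,2] \<or> l = [0,2,1] \<or> l = [1,0,2] \<or> l = [1,2,0] \<or> l = [2,0,1] \<or> l = [2,1,0]"
    unfolding perms6_def by simp
  then show "bij_betw (\<lambda>i. if i < 3 then l ! i else i) {..<3} {..<3}"
    unfolding L bij_betw_def by (elim disjE) (auto simp: inj_on_def)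
qed auto

lemma equiv_iff: assumes P: "P \<in> carrier_mat 3 3" and Q: "Q \<in> carrier_mat 3 3"
  shows "equiv_pattern P Q \<longleftrightarrow> eqlb (rowsm P) (rowsm Q)"
proof
  assume "equiv_pattern P Q"
  then obtain \<sigma> where s: "\<sigma> permutes {..<3}" and e: "\<forall>i<3. \<forall>j<3. P $$ (\<sigma> i, \<sigma> j) = Q $$ (i, j)"
    using P unfolding equiv_pattern_def by auto
  obtain l where l: "l \<in> set perms6" "\<forall>i<3. \<sigma> i = l ! i" using perm3_list[OF s] by blast
  have "\<forall>i<3. \<forall>j<3. rowsm P ! (l!i) ! (l!j) = rowsm Q ! i ! j"
  proof (intro allI impI)
    fix i j :: nat assume ij: "i < 3" "j < 3"
    then have "l!i < 3" "l!j < 3" using perms6_lt[OF l(1)] by auto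
    then have "rowsm P ! (l!i) ! (l!j) = P $$ (\<sigma> i, \<sigma> j)" using rowsm_nth l(2) ij by simp
    also have "\<dots> = Q $$ (i,j)" using e ij by blast
    also have "\<dots> = rowsm Q ! i ! j" using rowsm_nth ij by simp
    finally show "rowsm P ! (l!i) ! (l!j) = rowsm Q ! i ! j" .
  qed
  then show "eqlb (rowsm P) (rowsm Q)" unfolding eqlb_iff using l(1) by blast
next
  assume "eqlb (rowsm P) (rowsm Q)"
  then obtain l where l: "l \<in> set perms6" and e: "\<forall>i<3. \<forall>j<3. rowsm P ! (l!i) ! (l!j) = rowsm Q ! i ! j"
    unfolding eqlb_iff by blast
  define \<sigma> where "\<sigma> = (\<lambda>i. if i < 3 then l ! i else i)"
  have s: "\<sigma> permutes {..<3}" unfolding \<sigma>_def by (rule perms6_permutes[OF l])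
  have "\<forall>i<3. \<forall>j<3. P $$ (\<sigma> i, \<sigma> j) = Q $$ (i, j)"
  proof (intro allI impI)
    fix i j :: nat assume ij: "i < 3" "j < 3"
    then have lt: "l!i < 3" "l!j < 3" using perms6_lt[OF l] by auto
    have "P $$ (\<sigma> i, \<sigma> j) = rowsm P ! (l!i) ! (l!j)" using rowsm_nth lt ij unfolding \<sigma>_def by simp
    also have "\<dots> = rowsm Q ! i ! j" using e ij by blast
    also have "\<dots> = Q $$ (i,j)" using rowsm_nth ij by simp
    finally show "P $$ (\<sigma> i, \<sigma> j) = Q $$ (i, j)" .
  qed
  then show "equiv_pattern P Q" unfolding equiv_pattern_def using P Q s by auto
qed

definition is3 :: "bool list list \<Rightarrow> bool" where
  "is3 c \<longleftrightarrow> length c = 3 \<and> list_all (\<lambda>r. length r = 3) c"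

lemma is3_shape: assumes "is3 c"
  shows "c = [[c!0!0, c!0!1, c!0!2], [c!1!0, c!1!1, c!1!2], [c!2!0, c!2!1, c!2!2]]"
proof -
  have len: "length c = 3" and r: "\<forall>r\<in>set c. length r = 3" using assms unfolding is3_def list_all_iff by auto
  have row: "c ! k = [c!k!0, c!k!1, c!k!2]" if "k < 3" for k
  proof -
    have "length (c!k) = 3" using r len that by auto
    then show ?thesis by (intro nth_equalityI) (auto simp: all3 less_Suc_eq numeral_3_eq_3 numeral_2_eq_2)
  qed
  have "c = [c!0, c!1, c!2]" using len by (intro nth_equalityI) (auto simp: less_Suc_eq numeral_3_eq_3 numeral_2_eq_2)
  then show ?thesis using row by (metis zero_less_numeral one_less_numeral_iff semiring_norm(77) numeral_2_eq_2 lessI numeral_3_eq_3)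
qed

lemma pat_is3: assumes "is3 c" shows "pat c \<in> carrier_mat 3 3" "rowsm (pat c) = c"
  "\<And>i j. i < 3 \<Longrightarrow> j < 3 \<Longrightarrow> pat c $$ (i,j) = c ! i ! j"
proof -
  have len: "length c = 3" using assms unfolding is3_def by auto
  show "pat c \<in> carrier_mat 3 3" unfolding pat_def mat_of_rows_list_def using len by simp
  show "\<And>i j. i < 3 \<Longrightarrow> j < 3 \<Longrightarrow> pat c $$ (i,j) = c ! i ! j"
    unfolding pat_def mat_of_rows_list_def using len by simp
  then have "rowsm (pat c) = [[c!0!0, c!0!1, c!0!2], [c!1!0, c!1!1, c!1!2], [c!2!0, c!2!1, c!2!2]]"
    unfolding rowsm_def by simp
  then show "rowsm (pat c) = c" using is3_shape[OF assms] by simp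
qed

lemma irr_closed: assumes "(i,j) \<in> (arcs P)\<^sup>*" "i \<in> T" "\<forall>a b. (a,b) \<in> arcs P \<longrightarrow> a \<in> T \<longrightarrow> b \<in> T"
  shows "j \<in> T"
  using assms(1) by (induction rule: rtrancl_induct) (use assms in auto)

lemma irr_char: assumes P: "P \<in> carrier_mat 3 3" and I: "irreducible_pattern P"
  and ij: "i < 3" "j < 3" "i \<noteq> j"
  shows "P $$ (i,j) \<or> (\<exists>k<3. P $$ (i,k) \<and> P $$ (k,j))"
proof (rule ccontr)
  assume n: "\<not> (P $$ (i,j) \<or> (\<exists>k<3. P $$ (i,k) \<and> P $$ (k,j)))"
  define T where "T = {m. m = i \<or> (m < 3 \<and> P $$ (i,m))}"
  have "(i,j) \<in> (arcs P)\<^sup>*" using I P ij unfolding irreducible_pattern_def by auto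
  moreover have "i \<in> T" unfolding T_def by simp
  moreover have "\<forall>a b. (a,b) \<in> arcs P \<longrightarrow> a \<in> T \<longrightarrow> b \<in> T"
  proof (intro allI impI)
    fix a b assume ab: "(a,b) \<in> arcs P" and a: "a \<in> T"
    then have a3: "a < 3" and b3: "b < 3" and pab: "P $$ (a,b)" using P unfolding arcs_def by auto
    show "b \<in> T"
    proof (cases "a = i")
      case True then show ?thesis using pab b3 unfolding T_def by simp
    next
      case False
      then have pia: "P $$ (i,a)" using a unfolding T_def by simp
      have "b \<noteq> j" using n pia pab a3 by blast
      have "a \<noteq> j" using n pia by blast
      show ?thesis
      proof (cases "b = i \<or> b = a")
        case True then show ?thesis using pia a3 unfolding T_def by auto
      next
        case False
        with \<open>b \<noteq> j\<close> \<open>a \<noteq> j\<close> \<open>a \<noteq> i\<close> ij a3 b3 have False by arith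
        then show ?thesis ..
      qed
    qed
  qed
  ultimately have "j \<in> T" by (rule irr_closed)
  then show False using n ij unfolding T_def by auto
qed

lemma irr_irl: assumes P: "P \<in> carrier_mat 3 3" and I: "irreducible_pattern P"
  shows "irl (rowsm P)"
  unfolding irl_def list_all_iff list_ex_iff idx3_def
proof (intro ballI)
  fix i j assume i: "i \<in> set [0,1,2::nat]" and j: "j \<in> set [0,1,2::nat]"
  then have ij: "i < 3" "j < 3" by auto
  show "i = j \<or> rowsm P ! i ! j \<or> (\<exists>k\<in>set [0,1,2]. rowsm P ! i ! k \<and> rowsm P ! k ! j)"
  proof (cases "i = j")
    case False
    from irr_char[OF P I ij False] obtain k where "P $$ (i,j) \<or> (k < 3 \<and> P $$ (i,k) \<and> P $$ (k,j))" by blast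
    moreover have "k < 3 \<Longrightarrow> k \<in> set [0,1,2::nat]" by auto
    ultimately show ?thesis using rowsm_nth ij by metis
  qed simp
qed

lemma enum_all: "\<forall>a b c d e f g h i. irl [[a,b,c],[d,e,f],[g,h,i]] \<longrightarrow> list_ex (eqlb [[a,b,c],[d,e,f],[g,h,i]]) reps"
  by code_simp

lemma reps_is3: "list_all is3 reps"
  by code_simp

lemma chk: "list_all (\<lambda>c. list_ex (eqlb c) L1r) L1r \<and>
  list_all (\<lambda>c. \<not> list_ex (eqlb c) L1r \<and> list_ex (eqlb c) L2r \<and> \<not> list_ex (eqlb c) L3r \<and> \<not> eqlb c P4r) L2r \<and>
  list_all (\<lambda>c. \<not> list_ex (eqlb c) L1r \<and> \<not> list_ex (eqlb c) L2r \<and> list_ex (eqlb c) L3r \<and> \<not> eqlb c P4r) L3r \<and>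
  (\<not> list_ex (eqlb P4r) L1r \<and> \<not> list_ex (eqlb P4r) L2r \<and> \<not> list_ex (eqlb P4r) L3r \<and> eqlb P4r P4r) \<and>
  list_all (\<lambda>c. \<not> list_ex (eqlb c) L1r \<and> \<not> list_ex (eqlb c) L2r \<and> \<not> list_ex (eqlb c) L3r \<and> \<not> eqlb c P4r) NVr"
  by code_simp

lemma NN_cong: assumes "\<forall>i<3. \<forall>j<3. b i j = b' i j" shows "NN T b \<longleftrightarrow> NN T b'"
  using assms unfolding NN_def by simp

lemma pot_L1: "c \<in> set L1r \<Longrightarrow> NN TYPE('a::field) (\<lambda>i j. c!i!j)"
  unfolding L1r_def using w1_0 w1_1 w1_2 w1_3 by auto

lemma pot_L2: "c \<in> set L2r \<Longrightarrow> NN TYPE('p::prime_card mod_ring) (\<lambda>i j. c!i!j) \<longleftrightarrow> CARD('p) \<noteq> 2"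
  unfolding L2r_def using w2_0 w2_1 w2_2 w2_3 w2_4 w2_5 n2_0 n2_1 n2_2 n2_3 n2_4 n2_5 by auto

lemma pot_L3: "c \<in> set L3r \<Longrightarrow> NN TYPE('p::prime_card mod_ring) (\<lambda>i j. c!i!j) \<longleftrightarrow> CARD('p) \<notin> {2,3}"
  unfolding L3r_def using w3_0 w3_1 w3_2 m2_0 m2_1 m2_2 m3_0 m3_1 m3_2 by auto

lemma pot_P4: "NN TYPE('p::prime_card mod_ring) (\<lambda>i j. P4r!i!j) \<longleftrightarrow> cube_minus_one_splits TYPE('p mod_ring)"
  unfolding P4r_def cube_minus_one_splits_def using p4_iff by blast

lemma pot_NV: "c \<in> set NVr \<Longrightarrow> \<not> NN TYPE('a::field) (\<lambda>i j. c!i!j)"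
  unfolding NVr_def using nv_0 nv_1 nv_2 nv_3 nv_4 nv_5 nv_6 nv_7 nv_8 nv_9 nv_10 nv_11 nv_12 nv_13 nv_14 nv_15
  by auto

lemma list_equiv: assumes c: "is3 c" and L: "list_all is3 Ls"
  shows "(\<exists>Q\<in>set (map pat Ls). equiv_pattern (pat c) Q) \<longleftrightarrow> list_ex (eqlb c) Ls"
proof -
  have "(\<exists>Q\<in>set (map pat Ls). equiv_pattern (pat c) Q) \<longleftrightarrow> (\<exists>q\<in>set Ls. equiv_pattern (pat c) (pat q))"
    by simp
  also have "\<dots> \<longleftrightarrow> (\<exists>q\<in>set Ls. eqlb c q)"
  proof (intro bex_cong refl)
    fix q assume "q \<in> set Ls"
    then have q: "is3 q" using L unfolding list_all_iff by auto
    show "equiv_pattern (pat c) (pat q) \<longleftrightarrow> eqlb c q"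
      using equiv_iff[OF pat_is3(1)[OF c] pat_is3(1)[OF q]] pat_is3(2)[OF c] pat_is3(2)[OF q] by simp
  qed
  finally show ?thesis unfolding list_ex_iff .
qed

lemma lists_eq: "list1 = map pat L1r" "list2 = map pat L2r" "list3 = map pat L3r" "pat4 = pat P4r"
  unfolding list1_def L1r_def list2_def L2r_def list3_def L3r_def pat4_def P4r_def by simp_all

lemma main_rep: assumes c: "c \<in> set reps"
  shows "pot_nilpotent TYPE('p::prime_card mod_ring) (pat c) \<longleftrightarrow>
    ((\<exists>Q \<in> set list1. equiv_pattern (pat c) Q) \<or>
     ((\<exists>Q \<in> set list2. equiv_pattern (pat c) Q) \<and> CARD('p) \<noteq> 2) \<or>
     ((\<exists>Q \<in> set list3. equiv_pattern (pat c) Q) \<and> CARD('p) \<notin> {2, 3}) \<or>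
     (equiv_pattern (pat c) pat4 \<and> cube_minus_one_splits TYPE('p mod_ring)))"
proof -
  have all: "list_all is3 reps" by (rule reps_is3)
  then have c3: "is3 c" using c unfolding list_all_iff by auto
  have i1: "list_all is3 L1r" "list_all is3 L2r" "list_all is3 L3r" "is3 P4r"
    using all unfolding reps_def by auto
  have pot: "pot_nilpotent TYPE('p mod_ring) (pat c) \<longleftrightarrow> NN TYPE('p mod_ring) (\<lambda>i j. c!i!j)"
    unfolding pot_iff[OF pat_is3(1)[OF c3]] by (rule NN_cong) (simp add: pat_is3(3)[OF c3])
  have e4: "equiv_pattern (pat c) pat4 \<longleftrightarrow> eqlb c P4r"
    unfolding lists_eq using equiv_iff[OF pat_is3(1)[OF c3] pat_is3(1)[OF i1(4)]] pat_is3(2)[OF c3] pat_is3(2)[OF i1(4)] by simp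
  have R: "((\<exists>Q \<in> set list1. equiv_pattern (pat c) Q) \<or>
     ((\<exists>Q \<in> set list2. equiv_pattern (pat c) Q) \<and> CARD('p) \<noteq> 2) \<or>
     ((\<exists>Q \<in> set list3. equiv_pattern (pat c) Q) \<and> CARD('p) \<notin> {2, 3}) \<or>
     (equiv_pattern (pat c) pat4 \<and> cube_minus_one_splits TYPE('p mod_ring))) \<longleftrightarrow>
     (list_ex (eqlb c) L1r \<or> (list_ex (eqlb c) L2r \<and> CARD('p) \<noteq> 2) \<or>
      (list_ex (eqlb c) L3r \<and> CARD('p) \<notin> {2, 3}) \<or> (eqlb c P4r \<and> cube_minus_one_splits TYPE('p mod_ring)))"
    unfolding e4 unfolding lists_eq(1-3) list_equiv[OF c3 i1(1)] list_equiv[OF c3 i1(2)] list_equiv[OF c3 i1(3)] ..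
  have "c \<in> set L1r \<or> c \<in> set L2r \<or> c \<in> set L3r \<or> c = P4r \<or> c \<in> set NVr" using c unfolding reps_def by auto
  moreover have ch: "list_all (\<lambda>c. list_ex (eqlb c) L1r) L1r" 
    "list_all (\<lambda>c. \<not> list_ex (eqlb c) L1r \<and> list_ex (eqlb c) L2r \<and> \<not> list_ex (eqlb c) L3r \<and> \<not> eqlb c P4r) L2r"
    "list_all (\<lambda>c. \<not> list_ex (eqlb c) L1r \<and> \<not> list_ex (eqlb c) L2r \<and> list_ex (eqlb c) L3r \<and> \<not> eqlb c P4r) L3r"
    "\<not> list_ex (eqlb P4r) L1r \<and> \<not> list_ex (eqlb P4r) L2r \<and> \<not> list_ex (eqlb P4r) L3r \<and> eqlb P4r P4r"
    "list_all (\<lambda>c. \<not> list_ex (eqlb c) L1r \<and> \<not> list_ex (eqlb c) L2r \<and> \<not> list_ex (eqlb c) L3r \<and> \<not> eqlb c P4r) NVr"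
    using chk by auto
  ultimately have G: "NN TYPE('p mod_ring) (\<lambda>i j. c!i!j) \<longleftrightarrow>
     (list_ex (eqlb c) L1r \<or> (list_ex (eqlb c) L2r \<and> CARD('p) \<noteq> 2) \<or>
      (list_ex (eqlb c) L3r \<and> CARD('p) \<notin> {2, 3}) \<or> (eqlb c P4r \<and> cube_minus_one_splits TYPE('p mod_ring)))"
  proof (elim disjE)
    assume "c \<in> set L1r" then show ?thesis using ch(1) pot_L1[where 'a="'p mod_ring", of c] unfolding list_all_iff by auto
  next
    assume "c \<in> set L2r" then show ?thesis using ch(2) pot_L2[of c] unfolding list_all_iff by auto
  next
    assume "c \<in> set L3r" then show ?thesis using ch(3) pot_L3[of c] unfolding list_all_iff by auto
  next
    assume "c = P4r" then show ?thesis using ch(4) pot_P4 by auto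
  next
    assume "c \<in> set NVr" then show ?thesis using ch(5) pot_NV[where 'a="'p mod_ring", of c] unfolding list_all_iff by auto
  qed
  show ?thesis by (subst pot, subst R, rule G)
qed

theorem theorem5p3:
  fixes P :: "bool mat"
  assumes "P \<in> carrier_mat 3 3"
    and "irreducible_pattern P"
  shows "pot_nilpotent TYPE('p::prime_card mod_ring) P \<longleftrightarrow>
    ((\<exists>Q \<in> set list1. equiv_pattern P Q) \<or>
     ((\<exists>Q \<in> set list2. equiv_pattern P Q) \<and> CARD('p) \<noteq> 2) \<or>
     ((\<exists>Q \<in> set list3. equiv_pattern P Q) \<and> CARD('p) \<notin> {2, 3}) \<or>
     (equiv_pattern P pat4 \<and> cube_minus_one_splits TYPE('p mod_ring)))"
proof -
  have P: "P \<in> carrier_mat 3 3" by (rule assms(1))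
  have "irl (rowsm P)" by (rule irr_irl[OF P assms(2)])
  then have "list_ex (eqlb (rowsm P)) reps"
    using enum_all[rule_format, of "P$$(0,0)" "P$$(0,1)" "P$$(0,2)" "P$$(1,0)" "P$$(1,1)" "P$$(1,2)"
      "P$$(2,0)" "P$$(2,1)" "P$$(2,2)"] unfolding rowsm_def by blast
  then obtain c where c: "c \<in> set reps" and ec: "eqlb (rowsm P) c" unfolding list_ex_iff by blast
  have c3: "is3 c" using reps_is3 c unfolding list_all_iff by auto
  define C where "C = pat c"
  have C: "C \<in> carrier_mat 3 3" "rowsm C = c" unfolding C_def using pat_is3[OF c3] by auto
  have E: "equiv_pattern P C" using equiv_iff[OF P C(1)] ec C(2) by simp
  have EQ: "equiv_pattern P Q \<longleftrightarrow> equiv_pattern C Q" for Q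
    using equiv_trans[OF E] equiv_trans[OF equiv_sym[OF E]] by blast
  have "pot_nilpotent TYPE('p mod_ring) P \<longleftrightarrow> pot_nilpotent TYPE('p mod_ring) C"
    by (rule pot_equiv[OF P C(1) E])
  then show ?thesis unfolding EQ using main_rep[OF c] unfolding C_def by simp
qed

end
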